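(* Let $\alpha>0$. The spectrum of the generalized Alexander operator $C_{g_0}:\mathcal{B}_\alpha^0\to\mathcal{B}_\alpha^0$ is $\sigma(C_{g_0})=\{g_0(0)/n: n\in\mathbb{N}\}\cup\{0\}$, where $0$ is an approximate eigenvalue.
   Context: $\mathbb{D}=\{z\in\mathbb{C}:|z|<1\}$. For $\alpha>0$, the $\alpha$-Bloch space $\mathcal{B}_\alpha$ is the space of analytic functions $f$ on $\mathbb{D}$ with $\|f\|_{\mathcal{B}_\alpha}:=\sup_{z\in\mathbb{D}}(1-|z|^2)^\alpha|f'(z)|<\infty$. $\mathcal{B}_\alpha^0=\{f\in\mathcal{B}_\alpha: f(0)=0\}$, a complex Banach space with norm $\|\cdot\|_{\mathcal{B}_\alpha}$. Let $g_0(w)=\sum_{j=1}^k a_j+h(w)$, where $k\ge1$, $a_j\in\mathbb{C}$ with $|a_j|>0$, and $h$ is a bounded analytic function on $\mathbb{D}$; $C_{g_0}(f)(z)=\int_0^z\frac{f(w)g_0(w)}{w}\,dw$. An approximate eigenvalue of $T$ is $\lambda$ such that there are unit vectors $x_n$ with $\|(T-\lambda I)x_n\|\to0$. $\mathbb{N}=\{1,2,3,\dots\}$. *)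

theory Defs
  imports "HOL-Complex_Analysis.Complex_Analysis"
begin

text \<open>Functions on the unit disc are represented as functions \<open>complex \<Rightarrow> complex\<close>
  which vanish outside the disc (so that equality of such functions is equality on the disc).\<close>

definition bloch_weight :: "real \<Rightarrow> (complex \<Rightarrow> complex) \<Rightarrow> complex \<Rightarrow> real" where
  "bloch_weight \<alpha> f z = (1 - (cmod z)^2) powr \<alpha> * cmod (deriv f z)"

definition bloch_norm :: "real \<Rightarrow> (complex \<Rightarrow> complex) \<Rightarrow> real" where
  "bloch_norm \<alpha> f = (SUP z\<in>ball 0 1. bloch_weight \<alpha> f z)"

definition bloch0 :: "real \<Rightarrow> (complex \<Rightarrow> complex) set" where
  "bloch0 \<alpha> = {f. f holomorphic_on ball 0 1 \<and> f 0 = 0 \<and> (\<forall>z. z \<notin> ball 0 1 \<longrightarrow> f z = 0)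
                  \<and> bdd_above (bloch_weight \<alpha> f ` ball 0 1)}"

definition alexander_op :: "(complex \<Rightarrow> complex) \<Rightarrow> (complex \<Rightarrow> complex) \<Rightarrow> complex \<Rightarrow> complex" where
  "alexander_op g f = (\<lambda>z. if z \<in> ball 0 1
      then contour_integral (linepath 0 z) (\<lambda>w. f w * g w / w) else 0)"

definition bounded_op_on :: "real \<Rightarrow> ((complex \<Rightarrow> complex) \<Rightarrow> (complex \<Rightarrow> complex)) \<Rightarrow> bool" where
  "bounded_op_on \<alpha> S \<longleftrightarrow>
     (\<forall>f\<in>bloch0 \<alpha>. S f \<in> bloch0 \<alpha>) \<and>
     (\<forall>f\<in>bloch0 \<alpha>. \<forall>g\<in>bloch0 \<alpha>. \<forall>c::complex. S (\<lambda>z. f z + c * g z) = (\<lambda>z. S f z + c * S g z)) \<and>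
     (\<exists>M. \<forall>f\<in>bloch0 \<alpha>. bloch_norm \<alpha> (S f) \<le> M * bloch_norm \<alpha> f)"

definition bloch_spectrum :: "real \<Rightarrow> ((complex \<Rightarrow> complex) \<Rightarrow> (complex \<Rightarrow> complex)) \<Rightarrow> complex set" where
  "bloch_spectrum \<alpha> T = {\<mu>. \<not> (\<exists>S. bounded_op_on \<alpha> S \<and>
       (\<forall>f\<in>bloch0 \<alpha>. S (\<lambda>z. T f z - \<mu> * f z) = f \<and> (\<lambda>z. T (S f) z - \<mu> * S f z) = f))}"

definition approx_eigenvalue :: "real \<Rightarrow> ((complex \<Rightarrow> complex) \<Rightarrow> (complex \<Rightarrow> complex)) \<Rightarrow> complex \<Rightarrow> bool" where
  "approx_eigenvalue \<alpha> T \<mu> \<longleftrightarrow>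
     (\<exists>x::nat \<Rightarrow> complex \<Rightarrow> complex. (\<forall>n. x n \<in> bloch0 \<alpha> \<and> bloch_norm \<alpha> (x n) = 1) \<and>
        (\<lambda>n. bloch_norm \<alpha> (\<lambda>z. T (x n) z - \<mu> * x n z)) \<longlonglongrightarrow> 0)"

end

theory Submission
  imports Defs
begin

abbreviation DD :: "complex set" where "DD \<equiv> ball 0 1"

definition WW :: "real \<Rightarrow> complex \<Rightarrow> real" where
  "WW \<alpha> z = (1 - (cmod z)^2) powr \<alpha>"

lemma DD_sq: "z \<in> DD \<Longrightarrow> 0 < 1 - (cmod z)^2"
proof -
  assume "z \<in> DD"
  then have "cmod z < 1" by simp
  then have "(cmod z)^2 < 1" by (simp add: abs_square_less_1)
  then show ?thesis by linarith
qed

lemma WW_pos: assumes "z \<in> DD" shows "0 < WW \<alpha> z"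
  unfolding WW_def using DD_sq[OF assms] by simp

lemma WW_le1: "z \<in> DD \<Longrightarrow> 0 \<le> \<alpha> \<Longrightarrow> WW \<alpha> z \<le> 1"
  unfolding WW_def using DD_sq[of z]
  by (intro powr_le1) auto

lemma WW_mono: assumes a: "cmod w \<le> cmod z" "z \<in> DD" "0 \<le> \<alpha>"
  shows "WW \<alpha> z \<le> WW \<alpha> w"
proof -
  have "(cmod w)^2 \<le> (cmod z)^2" using a(1) by (simp add: power_mono)
  then show ?thesis unfolding WW_def using DD_sq[OF a(2)] a(3)
    by (intro powr_mono2) auto
qed

lemma WW_0[simp]: "WW \<alpha> 0 = 1" by (simp add: WW_def)

lemma bloch_weight_WW: "bloch_weight \<alpha> f z = WW \<alpha> z * cmod (deriv f z)"
  by (simp add: bloch_weight_def WW_def)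

lemma bloch_weight_nonneg: "z \<in> DD \<Longrightarrow> 0 \<le> bloch_weight \<alpha> f z"
  unfolding bloch_weight_WW using WW_pos[of z \<alpha>] by simp

lemma bloch_weight_le_norm: "f \<in> bloch0 \<alpha> \<Longrightarrow> z \<in> DD \<Longrightarrow> bloch_weight \<alpha> f z \<le> bloch_norm \<alpha> f"
  unfolding bloch_norm_def bloch0_def by (auto intro!: cSUP_upper)

lemma bloch_norm_nonneg: "f \<in> bloch0 \<alpha> \<Longrightarrow> 0 \<le> bloch_norm \<alpha> f"
  using bloch_weight_le_norm[of f \<alpha> 0] bloch_weight_nonneg[of 0 \<alpha> f] by simp

lemma bloch_norm_le: "(\<And>z. z \<in> DD \<Longrightarrow> bloch_weight \<alpha> f z \<le> B) \<Longrightarrow> bloch_norm \<alpha> f \<le> B"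
  unfolding bloch_norm_def by (rule cSUP_least) auto

lemma bloch0I:
  assumes "f holomorphic_on DD" "f 0 = 0" "\<And>z. z \<notin> DD \<Longrightarrow> f z = 0"
    "\<And>z. z \<in> DD \<Longrightarrow> bloch_weight \<alpha> f z \<le> B"
  shows "f \<in> bloch0 \<alpha>"
proof -
  have "bdd_above (bloch_weight \<alpha> f ` DD)"
    by (rule bdd_aboveI2[where M=B]) (use assms(4) in simp)
  then show ?thesis unfolding bloch0_def using assms(1-3) by simp
qed

lemma bloch0D:
  assumes "f \<in> bloch0 \<alpha>"
  shows "f holomorphic_on DD" "f 0 = 0" "\<And>z. z \<notin> DD \<Longrightarrow> f z = 0"
  using assms unfolding bloch0_def by auto

lemma deriv_bound_bloch:
  assumes "f \<in> bloch0 \<alpha>" "z \<in> DD"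
  shows "WW \<alpha> z * cmod (deriv f z) \<le> bloch_norm \<alpha> f"
  using bloch_weight_le_norm[OF assms] by (simp add: bloch_weight_WW)

lemma pointwise_bound:
  assumes f: "f \<in> bloch0 \<alpha>" and z: "z \<in> DD" and a: "0 \<le> \<alpha>"
  shows "WW \<alpha> z * cmod (f z) \<le> cmod z * bloch_norm \<alpha> f"
proof -
  let ?N = "bloch_norm \<alpha> f"
  have hol: "f holomorphic_on DD" using bloch0D[OF f] by blast
  have sub: "cball (0::complex) (cmod z) \<subseteq> DD" using z by (auto simp: subset_iff)
  have Wz: "0 < WW \<alpha> z" using WW_pos[OF z] .
  have bd: "cmod (f z - f 0) \<le> (?N / WW \<alpha> z) * cmod (z - 0)"
  proof (rule field_differentiable_bound[where S="cball (0::complex) (cmod z)" and f'="deriv f"])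
    show "convex (cball (0::complex) (cmod z))" by (rule convex_cball)
    show "z \<in> cball 0 (cmod z)" by simp
    show "0 \<in> cball (0::complex) (cmod z)" by simp
  next
    fix w assume w: "w \<in> cball (0::complex) (cmod z)"
    then have wD: "w \<in> DD" using sub by blast
    have "(f has_field_derivative deriv f w) (at w)"
      using hol wD by (intro holomorphic_derivI[of f DD]) auto
    then show "(f has_field_derivative deriv f w) (at w within cball 0 (cmod z))"
      by (rule DERIV_subset) simp
    have wz: "cmod w \<le> cmod z" using w by simp
    have Ww: "WW \<alpha> z \<le> WW \<alpha> w" by (rule WW_mono[OF wz z a])
    have "WW \<alpha> w * cmod (deriv f w) \<le> ?N" using deriv_bound_bloch[OF f wD] .
    moreover have "WW \<alpha> z * cmod (deriv f w) \<le> WW \<alpha> w * cmod (deriv f w)"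
      by (rule mult_right_mono[OF Ww norm_ge_zero])
    ultimately have "WW \<alpha> z * cmod (deriv f w) \<le> ?N" by linarith
    then show "cmod (deriv f w) \<le> ?N / WW \<alpha> z" using Wz by (simp add: field_simps)
  qed
  then have "cmod (f z) \<le> (?N / WW \<alpha> z) * cmod z" using bloch0D(2)[OF f] by simp
  then show ?thesis using Wz by (simp add: field_simps)
qed


definition pole0 :: "(complex \<Rightarrow> complex) \<Rightarrow> complex \<Rightarrow> complex" where
  "pole0 F = (\<lambda>z. if z = 0 then deriv F 0 else F z / z)"

lemma pole0_hol:
  assumes "F holomorphic_on DD" "F 0 = 0"
  shows "pole0 F holomorphic_on DD"
proof -
  have "(\<lambda>z. if z = 0 then deriv F 0 else (F z - F 0) / (z - 0)) holomorphic_on DD"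
    by (rule pole_lemma[OF assms(1)]) (simp add: interior_open)
  moreover have "(\<lambda>z. if z = 0 then deriv F 0 else (F z - F 0) / (z - 0)) = pole0 F"
    using assms(2) by (simp add: pole0_def fun_eq_iff)
  ultimately show ?thesis by simp
qed

lemma pole0_mult: "F 0 = 0 \<Longrightarrow> z * pole0 F z = F z"
  by (simp add: pole0_def)

lemma pole0_nz: "z \<noteq> 0 \<Longrightarrow> pole0 F z = F z / z"
  by (simp add: pole0_def)

lemma prim_deriv:
  assumes Q: "Q holomorphic_on DD" and z: "z \<in> DD"
  shows "((\<lambda>z. contour_integral (linepath 0 z) Q) has_field_derivative Q z) (at z)"
proof (rule triangle_contour_integrals_starlike_primitive[where S=DD])
  show "continuous_on DD Q" using Q by (rule holomorphic_on_imp_continuous_on)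
  show "(0::complex) \<in> DD" by simp
  show "open DD" by simp
  show "z \<in> DD" by (rule z)
  fix y :: complex assume "y \<in> DD"
  then show "closed_segment 0 y \<subseteq> DD"
    by (simp add: closed_segment_subset)
next
  fix b c :: complex assume bc: "closed_segment b c \<subseteq> DD"
  then have "b \<in> DD" "c \<in> DD" by auto
  then have "convex hull {0, b, c} \<subseteq> DD"
    by (intro hull_minimal) auto
  then have "Q holomorphic_on convex hull {0, b, c}"
    using Q holomorphic_on_subset by blast
  then have "(Q has_contour_integral 0) (linepath 0 b +++ linepath b c +++ linepath c 0)"
    by (rule Cauchy_theorem_triangle)
  then show "contour_integral (linepath 0 b) Q + contour_integral (linepath b c) Q +
       contour_integral (linepath c 0) Q = 0"
    by (rule has_chain_integral_chain_integral3)
qed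

lemma contour_integral_spike0:
  assumes Q: "Q holomorphic_on DD" and z: "z \<in> DD" and eq: "\<And>w. w \<noteq> 0 \<Longrightarrow> P w = Q w"
  shows "contour_integral (linepath 0 z) P = contour_integral (linepath 0 z) Q"
proof (cases "z = 0")
  case True then show ?thesis by simp
next
  case znz: False
  have "closed_segment 0 z \<subseteq> DD" using z by (simp add: closed_segment_subset)
  then have "continuous_on (closed_segment 0 z) Q"
    using Q holomorphic_on_imp_continuous_on holomorphic_on_subset by blast
  then have "Q contour_integrable_on (linepath 0 z)"
    by (rule contour_integrable_continuous_linepath)
  then obtain i where i: "(Q has_contour_integral i) (linepath 0 z)"
    by (auto simp: contour_integrable_on_def)
  have "(P has_contour_integral i) (linepath 0 z)"
    unfolding has_contour_integral_def
  proof (subst has_integral_spike_eq[where S="{0}"])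
    show "negligible {0::real}" by simp
    fix t :: real assume t: "t \<in> {0..1} - {0}"
    show "Q (linepath 0 z t) * vector_derivative (linepath 0 z) (at t within {0..1}) =
          P (linepath 0 z t) * vector_derivative (linepath 0 z) (at t within {0..1})"
    proof -
      have "linepath 0 z t \<noteq> 0" using t znz by (simp add: linepath_def scaleR_conv_of_real)
      then show ?thesis using eq by simp
    qed
  next
    show "((\<lambda>x. Q (linepath 0 z x) * vector_derivative (linepath 0 z) (at x within {0..1})) has_integral i) {0..1}"
      using i by (simp add: has_contour_integral_def)
  qed
  then show ?thesis using i by (simp add: contour_integral_unique)
qed

lemma alex_eq:
  assumes f: "f holomorphic_on DD" "f 0 = 0" and g: "g holomorphic_on DD" and z: "z \<in> DD"
  shows "alexander_op g f z = contour_integral (linepath 0 z) (pole0 (\<lambda>w. f w * g w))"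
proof -
  have h: "(\<lambda>w. f w * g w) holomorphic_on DD" using f g by (intro holomorphic_intros) auto
  have "pole0 (\<lambda>w. f w * g w) holomorphic_on DD" by (rule pole0_hol[OF h]) (simp add: f)
  then show ?thesis unfolding alexander_op_def using z
    by (simp add: contour_integral_spike0[where P="\<lambda>w. f w * g w / w"] pole0_nz)
qed

lemma alex_deriv:
  assumes f: "f holomorphic_on DD" "f 0 = 0" and g: "g holomorphic_on DD" and z: "z \<in> DD"
  shows "(alexander_op g f has_field_derivative pole0 (\<lambda>w. f w * g w) z) (at z)"
proof -
  have h: "(\<lambda>w. f w * g w) holomorphic_on DD" using f g by (intro holomorphic_intros) auto
  have hq: "pole0 (\<lambda>w. f w * g w) holomorphic_on DD" by (rule pole0_hol[OF h]) (simp add: f)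
  show ?thesis
    by (rule has_field_derivative_transform_within_open[OF prim_deriv[OF hq z], where S=DD])
       (use z alex_eq[OF f g] in auto)
qed


definition hz :: "(complex \<Rightarrow> complex) \<Rightarrow> bool" where
  "hz f \<longleftrightarrow> f holomorphic_on DD \<and> f 0 = 0 \<and> (\<forall>z. z \<notin> DD \<longrightarrow> f z = 0)"

lemma bloch0_hz: "f \<in> bloch0 \<alpha> \<Longrightarrow> hz f"
  unfolding hz_def using bloch0D by blast

lemma WW_cont: "continuous_on DD (WW \<alpha>)"
proof -
  have "continuous_on DD (\<lambda>z. (1 - (cmod z)^2) powr \<alpha>)"
    by (intro continuous_intros) (use DD_sq in force)
  then show ?thesis unfolding WW_def[abs_def] .
qed

lemma cont0_le:
  fixes \<phi> \<psi> :: "complex \<Rightarrow> real"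
  assumes "continuous_on DD \<phi>" "continuous_on DD \<psi>"
    and le: "\<And>z. z \<in> DD \<Longrightarrow> z \<noteq> 0 \<Longrightarrow> \<phi> z \<le> \<psi> z"
  shows "\<phi> 0 \<le> \<psi> 0"
proof -
  have "isCont \<phi> 0" "isCont \<psi> 0"
    using assms(1,2) by (auto intro!: continuous_on_interior simp: interior_open)
  then have t1: "(\<phi> \<longlongrightarrow> \<phi> 0) (at 0)" and t2: "(\<psi> \<longlongrightarrow> \<psi> 0) (at 0)"
    by (auto simp: isCont_def)
  have ev: "eventually (\<lambda>z. \<phi> z \<le> \<psi> z) (at (0::complex))"
  proof -
    have "eventually (\<lambda>z. z \<in> DD) (at (0::complex))"
      by (rule eventually_at_in_open') auto
    moreover have "eventually (\<lambda>z. z \<noteq> 0) (at (0::complex))"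
      by (rule eventually_at_filter[THEN iffD2]) simp
    ultimately show ?thesis by eventually_elim (use le in blast)
  qed
  show ?thesis by (rule tendsto_le[OF _ t2 t1 ev]) simp
qed

lemma deriv_zero_off0:
  assumes u: "u holomorphic_on DD" "u 0 = 0" and d: "\<And>z. z \<in> DD \<Longrightarrow> z \<noteq> 0 \<Longrightarrow> deriv u z = 0"
  shows "\<And>z. z \<in> DD \<Longrightarrow> u z = 0"
proof -
  have du: "deriv u holomorphic_on DD" using u(1) by (rule holomorphic_deriv) simp
  have "(\<lambda>z. cmod (deriv u z)) 0 \<le> (\<lambda>z. 0) 0"
    by (rule cont0_le) (use d du holomorphic_on_imp_continuous_on in \<open>auto intro!: continuous_intros\<close>)
  then have d0: "deriv u 0 = 0" by simp
  have "\<exists>c. \<forall>x\<in>DD. u x = c"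
  proof (rule has_field_derivative_zero_constant)
    show "convex DD" by simp
    fix x assume x: "x \<in> DD"
    have "(u has_field_derivative deriv u x) (at x within DD)"
      using u(1) x by (intro holomorphic_derivI) auto
    moreover have "deriv u x = 0" using d d0 x by (cases "x = 0") auto
    ultimately show "(u has_field_derivative 0) (at x within DD)" by simp
  qed
  then obtain c where c: "\<forall>x\<in>DD. u x = c" by blast
  then have "c = 0" using u(2) by force
  then show "\<And>z. z \<in> DD \<Longrightarrow> u z = 0" using c by blast
qed

lemma hz_eq:
  assumes "hz f" "hz g" and d: "\<And>z. z \<in> DD \<Longrightarrow> z \<noteq> 0 \<Longrightarrow> deriv f z = deriv g z"
  shows "f = g"
proof -
  have hf: "f holomorphic_on DD" "f 0 = 0" "\<And>z. z \<notin> DD \<Longrightarrow> f z = 0" using assms(1) by (auto simp: hz_def)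
  have hg: "g holomorphic_on DD" "g 0 = 0" "\<And>z. z \<notin> DD \<Longrightarrow> g z = 0" using assms(2) by (auto simp: hz_def)
  have hu: "(\<lambda>z. f z - g z) holomorphic_on DD" using hf hg by (intro holomorphic_intros) auto
  have "(\<lambda>z. f z - g z) z = 0" if "z \<in> DD" for z
  proof (rule deriv_zero_off0[OF hu _ _ that])
    show "f 0 - g 0 = 0" using hf hg by simp
    fix w assume w: "w \<in> DD" "w \<noteq> 0"
    have "deriv (\<lambda>z. f z - g z) w = deriv f w - deriv g w"
      using hf(1) hg(1) w by (intro deriv_diff) (auto intro: holomorphic_on_imp_differentiable_at)
    then show "deriv (\<lambda>z. f z - g z) w = 0" using d w by simp
  qed
  then show ?thesis using hf(3) hg(3) by (metis eq_iff_diff_eq_0 ext)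
qed

lemma hz_lin:
  assumes "hz f" "hz g" shows "hz (\<lambda>z. f z + c * g z)"
  using assms unfolding hz_def by (auto intro!: holomorphic_intros)

lemma deriv_lin:
  assumes "f holomorphic_on DD" "g holomorphic_on DD" "z \<in> DD"
  shows "deriv (\<lambda>z. f z + c * g z) z = deriv f z + c * deriv g z"
proof -
  have "f field_differentiable at z" "g field_differentiable at z"
    using assms by (auto intro: holomorphic_on_imp_differentiable_at)
  then show ?thesis by (simp add: field_differentiable_mult field_differentiable_const)
qed

lemma deriv_at_hz:
  assumes "(f has_field_derivative d) (at z)" shows "deriv f z = d"
  using assms by (rule DERIV_imp_deriv)


lemma alex_hz:
  assumes f: "hz f" and g: "g holomorphic_on DD"
  shows "hz (alexander_op g f)"
    and "\<And>z. z \<in> DD \<Longrightarrow> deriv (alexander_op g f) z = pole0 (\<lambda>w. f w * g w) z"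
proof -
  have f1: "f holomorphic_on DD" "f 0 = 0" using f by (auto simp: hz_def)
  have D: "\<And>z. z \<in> DD \<Longrightarrow> (alexander_op g f has_field_derivative pole0 (\<lambda>w. f w * g w) z) (at z)"
    by (rule alex_deriv[OF f1 g])
  show "\<And>z. z \<in> DD \<Longrightarrow> deriv (alexander_op g f) z = pole0 (\<lambda>w. f w * g w) z"
    using D by (rule DERIV_imp_deriv)
  have "alexander_op g f holomorphic_on DD"
    unfolding holomorphic_on_def field_differentiable_def
    using D by (meson DERIV_subset subset_UNIV)
  moreover have "alexander_op g f 0 = 0" by (simp add: alexander_op_def)
  moreover have "\<And>z. z \<notin> DD \<Longrightarrow> alexander_op g f z = 0" by (simp add: alexander_op_def)
  ultimately show "hz (alexander_op g f)" by (simp add: hz_def)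
qed

lemma alex_bound:
  assumes f: "f \<in> bloch0 \<alpha>" and g: "g holomorphic_on DD" and G: "\<And>z. z \<in> DD \<Longrightarrow> cmod (g z) \<le> G"
    and a: "0 \<le> \<alpha>"
  shows "alexander_op g f \<in> bloch0 \<alpha>" "bloch_norm \<alpha> (alexander_op g f) \<le> G * bloch_norm \<alpha> f"
proof -
  have hf: "hz f" using f by (rule bloch0_hz)
  have f1: "f holomorphic_on DD" "f 0 = 0" using hf by (auto simp: hz_def)
  note T = alex_hz[OF hf g]
  let ?N = "bloch_norm \<alpha> f"
  let ?q = "pole0 (\<lambda>w. f w * g w)"
  have hq: "?q holomorphic_on DD"
    by (rule pole0_hol) (use f1 g in \<open>auto intro!: holomorphic_intros\<close>)
  have off0: "WW \<alpha> z * cmod (?q z) \<le> G * ?N" if z: "z \<in> DD" "z \<noteq> 0" for z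
  proof -
    have "WW \<alpha> z * cmod (?q z) = (WW \<alpha> z * cmod (f z)) * cmod (g z) / cmod z"
      using z by (simp add: pole0_nz norm_mult norm_divide)
    also have "\<dots> \<le> (cmod z * ?N) * cmod (g z) / cmod z"
      by (intro divide_right_mono mult_right_mono pointwise_bound[OF f z(1) a]) auto
    also have "\<dots> = cmod (g z) * ?N" using z by simp
    also have "\<dots> \<le> G * ?N" using G[OF z(1)] bloch_norm_nonneg[OF f] by (rule mult_right_mono)
    finally show ?thesis .
  qed
  have at0: "(\<lambda>z. WW \<alpha> z * cmod (?q z)) 0 \<le> (\<lambda>z. G * ?N) 0"
    by (rule cont0_le) (use off0 WW_cont hq holomorphic_on_imp_continuous_on in \<open>auto intro!: continuous_intros\<close>)
  have all: "bloch_weight \<alpha> (alexander_op g f) z \<le> G * ?N" if z: "z \<in> DD" for z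
  proof -
    have "bloch_weight \<alpha> (alexander_op g f) z = WW \<alpha> z * cmod (?q z)"
      using T(2)[OF z] by (simp add: bloch_weight_WW)
    then show ?thesis using off0[OF z] at0 by (cases "z = 0") auto
  qed
  show "alexander_op g f \<in> bloch0 \<alpha>"
    using T(1) all by (intro bloch0I[where B="G * ?N"]) (auto simp: hz_def)
  show "bloch_norm \<alpha> (alexander_op g f) \<le> G * ?N"
    using all by (rule bloch_norm_le)
qed

lemma alex_lin:
  assumes f: "hz f" and f2: "hz f2" and g: "g holomorphic_on DD"
  shows "alexander_op g (\<lambda>z. f z + c * f2 z) = (\<lambda>z. alexander_op g f z + c * alexander_op g f2 z)"
proof (rule hz_eq)
  have hl: "hz (\<lambda>z. f z + c * f2 z)" using f f2 by (rule hz_lin)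
  note T1 = alex_hz[OF f g] and T2 = alex_hz[OF f2 g] and T3 = alex_hz[OF hl g]
  show "hz (alexander_op g (\<lambda>z. f z + c * f2 z))" by (rule T3(1))
  show "hz (\<lambda>z. alexander_op g f z + c * alexander_op g f2 z)" using T1(1) T2(1) by (rule hz_lin)
  fix z assume z: "z \<in> DD" "z \<noteq> 0"
  have "deriv (\<lambda>z. alexander_op g f z + c * alexander_op g f2 z) z
      = deriv (alexander_op g f) z + c * deriv (alexander_op g f2) z"
    using T1(1) T2(1) z by (intro deriv_lin) (auto simp: hz_def)
  also have "\<dots> = pole0 (\<lambda>w. f w * g w) z + c * pole0 (\<lambda>w. f2 w * g w) z"
    using T1(2) T2(2) z by simp
  also have "\<dots> = pole0 (\<lambda>w. (f w + c * f2 w) * g w) z"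
    using z by (simp add: pole0_nz field_simps)
  also have "\<dots> = deriv (alexander_op g (\<lambda>z. f z + c * f2 z)) z" using T3(2) z by simp
  finally show "deriv (alexander_op g (\<lambda>z. f z + c * f2 z)) z =
      deriv (\<lambda>z. alexander_op g f z + c * alexander_op g f2 z) z" by simp
qed

lemma alex_bounded_op:
  assumes g: "g holomorphic_on DD" and G: "\<And>z. z \<in> DD \<Longrightarrow> cmod (g z) \<le> G" and a: "0 \<le> \<alpha>"
  shows "bounded_op_on \<alpha> (alexander_op g)"
  unfolding bounded_op_on_def
  using alex_bound[OF _ g G a] alex_lin[OF bloch0_hz bloch0_hz g] by blast


lemma weight_at0:
  assumes F: "F holomorphic_on DD" and le: "\<And>z. z \<in> DD \<Longrightarrow> z \<noteq> 0 \<Longrightarrow> bloch_weight \<alpha> F z \<le> B"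
    and z: "z \<in> DD"
  shows "bloch_weight \<alpha> F z \<le> B"
proof (cases "z = 0")
  case True
  have dF: "deriv F holomorphic_on DD" using F by (rule holomorphic_deriv) simp
  have "(\<lambda>z. WW \<alpha> z * cmod (deriv F z)) 0 \<le> (\<lambda>z. B) 0"
    by (rule cont0_le) (use le WW_cont dF holomorphic_on_imp_continuous_on in
        \<open>auto intro!: continuous_intros simp: bloch_weight_WW\<close>)
  then show ?thesis using True by (simp add: bloch_weight_WW)
qed (use le z in auto)

lemma bloch_scale:
  assumes F: "F \<in> bloch0 \<alpha>"
  shows "(\<lambda>z. a * F z) \<in> bloch0 \<alpha>" "bloch_norm \<alpha> (\<lambda>z. a * F z) = cmod a * bloch_norm \<alpha> F"
proof -
  have hF: "F holomorphic_on DD" "F 0 = 0" "\<And>z. z \<notin> DD \<Longrightarrow> F z = 0" using bloch0D[OF F] by auto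
  have w: "bloch_weight \<alpha> (\<lambda>z. a * F z) z = cmod a * bloch_weight \<alpha> F z" if z: "z \<in> DD" for z
  proof -
    have "F field_differentiable at z" using hF(1) z by (auto intro: holomorphic_on_imp_differentiable_at)
    then have "deriv (\<lambda>z. a * F z) z = a * deriv F z" by (rule deriv_cmult)
    then show ?thesis by (simp add: bloch_weight_WW norm_mult)
  qed
  have le1: "bloch_weight \<alpha> (\<lambda>z. a * F z) z \<le> cmod a * bloch_norm \<alpha> F" if z: "z \<in> DD" for z
    using w[OF z] bloch_weight_le_norm[OF F z] by (simp add: mult_left_mono)
  show B: "(\<lambda>z. a * F z) \<in> bloch0 \<alpha>"
    by (rule bloch0I[OF _ _ _ le1]) (use hF in \<open>auto intro!: holomorphic_intros\<close>)
  have "bloch_norm \<alpha> (\<lambda>z. a * F z) \<le> cmod a * bloch_norm \<alpha> F" by (rule bloch_norm_le[OF le1])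
  moreover have "cmod a * bloch_norm \<alpha> F \<le> bloch_norm \<alpha> (\<lambda>z. a * F z)"
  proof (cases "a = 0")
    case True then show ?thesis using bloch_norm_nonneg[OF B] by simp
  next
    case False
    have "bloch_norm \<alpha> F \<le> bloch_norm \<alpha> (\<lambda>z. a * F z) / cmod a"
    proof (rule bloch_norm_le)
      fix z assume z: "z \<in> DD"
      have "cmod a * bloch_weight \<alpha> F z \<le> bloch_norm \<alpha> (\<lambda>z. a * F z)"
        using w[OF z] bloch_weight_le_norm[OF B z] by simp
      then show "bloch_weight \<alpha> F z \<le> bloch_norm \<alpha> (\<lambda>z. a * F z) / cmod a"
        using False by (simp add: field_simps)
    qed
    then show ?thesis using False by (simp add: field_simps)
  qed
  ultimately show "bloch_norm \<alpha> (\<lambda>z. a * F z) = cmod a * bloch_norm \<alpha> F" by simp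
qed

lemma alex_scale:
  assumes f: "hz f" and g: "g holomorphic_on DD"
  shows "alexander_op g (\<lambda>z. c * f z) = (\<lambda>z. c * alexander_op g f z)"
proof -
  have z: "hz (\<lambda>z. 0)" by (simp add: hz_def)
  have "alexander_op g (\<lambda>z. 0 + c * f z) = (\<lambda>z. alexander_op g (\<lambda>z. 0) z + c * alexander_op g f z)"
    by (rule alex_lin[OF z f g])
  moreover have "alexander_op g (\<lambda>z. 0) = (\<lambda>z. 0)" by (simp add: alexander_op_def fun_eq_iff)
  ultimately show ?thesis by simp
qed

definition en :: "nat \<Rightarrow> complex \<Rightarrow> complex" where
  "en n = (\<lambda>z. if z \<in> DD then z ^ n else 0)"

lemma en_deriv: "z \<in> DD \<Longrightarrow> (en n has_field_derivative of_nat n * z ^ (n - 1)) (at z)"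
  unfolding en_def
  by (rule has_field_derivative_transform_within_open[where f="\<lambda>z. z ^ n" and S=DD])
     (auto intro!: derivative_eq_intros)

lemma en_hol: "en n holomorphic_on DD"
  unfolding holomorphic_on_def field_differentiable_def
  using en_deriv by (meson DERIV_subset subset_UNIV)

lemma en_hz: "n \<ge> 1 \<Longrightarrow> hz (en n)"
  using en_hol by (simp add: hz_def en_def)

lemma en_weight: "z \<in> DD \<Longrightarrow> bloch_weight \<alpha> (en n) z = WW \<alpha> z * (of_nat n * cmod z ^ (n - 1))"
  using DERIV_imp_deriv[OF en_deriv] by (simp add: bloch_weight_WW norm_mult norm_power)

lemma en_bloch:
  assumes n: "n \<ge> 1" and a: "0 \<le> \<alpha>"
  shows "en n \<in> bloch0 \<alpha>" "0 < bloch_norm \<alpha> (en n)"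
proof -
  have le: "bloch_weight \<alpha> (en n) z \<le> of_nat n" if z: "z \<in> DD" for z
  proof -
    have "WW \<alpha> z * (of_nat n * cmod z ^ (n - 1)) \<le> 1 * (of_nat n * 1)"
      using WW_le1[OF z a] WW_pos[OF z, of \<alpha>] z
      by (intro mult_mono mult_left_mono power_le_one) auto
    then show ?thesis using en_weight[OF z] by simp
  qed
  show B: "en n \<in> bloch0 \<alpha>"
    using en_hz[OF n] le by (intro bloch0I[where B="of_nat n"]) (auto simp: hz_def)
  have h: "(1/2::complex) \<in> DD" by simp
  have "0 < bloch_weight \<alpha> (en n) (1/2)"
    using en_weight[OF h] WW_pos[OF h, of \<alpha>] n by simp
  then show "0 < bloch_norm \<alpha> (en n)" using bloch_weight_le_norm[OF B h] by linarith
qed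

lemma alex_en_bound:
  assumes n: "n \<ge> 1" and a: "0 \<le> \<alpha>" and g: "g holomorphic_on DD"
    and G: "\<And>z. z \<in> DD \<Longrightarrow> cmod (g z) \<le> G"
  shows "bloch_norm \<alpha> (alexander_op g (en n)) \<le> G * bloch_norm \<alpha> (en n) / of_nat n"
proof -
  note T = alex_hz[OF en_hz[OF n] g]
  note B = en_bloch[OF n a]
  have "cmod (g 0) \<le> G" using G by simp
  then have G0: "0 \<le> G" by (meson norm_ge_zero order_trans)
  show ?thesis
  proof (rule bloch_norm_le, rule weight_at0)
    show "alexander_op g (en n) holomorphic_on DD" using T(1) by (simp add: hz_def)
  next
    fix z assume z: "z \<in> DD" "z \<noteq> 0"
    have "deriv (alexander_op g (en n)) z = z ^ (n - 1) * g z"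
      using T(2)[OF z(1)] z n by (simp add: pole0_nz en_def power_eq_if)
    then have "bloch_weight \<alpha> (alexander_op g (en n)) z = WW \<alpha> z * (cmod z ^ (n - 1) * cmod (g z))"
      by (simp add: bloch_weight_WW norm_mult norm_power)
    also have "\<dots> \<le> WW \<alpha> z * (cmod z ^ (n - 1) * G)"
      using WW_pos[OF z(1), of \<alpha>] G[OF z(1)] by (intro mult_left_mono) auto
    also have "\<dots> = G * bloch_weight \<alpha> (en n) z / of_nat n"
      using en_weight[OF z(1)] n by simp
    also have "\<dots> \<le> G * bloch_norm \<alpha> (en n) / of_nat n"
      using bloch_weight_le_norm[OF B(1) z(1)] G0 by (intro divide_right_mono mult_left_mono) auto
    finally show "bloch_weight \<alpha> (alexander_op g (en n)) z \<le> G * bloch_norm \<alpha> (en n) / of_nat n" .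
  qed
qed

lemma approx_eig0:
  assumes a: "0 \<le> \<alpha>" and g: "g holomorphic_on DD" and G: "\<And>z. z \<in> DD \<Longrightarrow> cmod (g z) \<le> G"
  shows "approx_eigenvalue \<alpha> (alexander_op g) 0"
proof -
  define N where "N = (\<lambda>n. bloch_norm \<alpha> (en (Suc n)))"
  define x where "x = (\<lambda>n z. complex_of_real (1 / N n) * en (Suc n) z)"
  have Npos: "0 < N n" for n unfolding N_def using en_bloch[of "Suc n" \<alpha>] a by simp
  have EB: "en (Suc n) \<in> bloch0 \<alpha>" for n using en_bloch(1)[of "Suc n" \<alpha>] a by simp
  have xb: "x n \<in> bloch0 \<alpha>" for n
    unfolding x_def by (rule bloch_scale(1)[OF EB])
  have xn0: "bloch_norm \<alpha> (x n) = cmod (complex_of_real (1 / N n)) * N n" for n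
    unfolding x_def N_def by (rule bloch_scale(2)[OF EB])
  have xn: "bloch_norm \<alpha> (x n) = 1" for n
    using xn0[of n] Npos[of n] by (simp add: norm_divide)
  have Tx: "alexander_op g (x n) = (\<lambda>z. complex_of_real (1 / N n) * alexander_op g (en (Suc n)) z)" for n
    unfolding x_def by (rule alex_scale[OF en_hz g]) simp
  have "cmod (g 0) \<le> G" using G by simp
  then have G0: "0 \<le> G" by (meson norm_ge_zero order_trans)
  have bnd: "bloch_norm \<alpha> (\<lambda>z. alexander_op g (x n) z - 0 * x n z) \<le> G / of_nat (Suc n)" for n
  proof -
    have Tb: "alexander_op g (en (Suc n)) \<in> bloch0 \<alpha>"
      using alex_bound(1)[OF en_bloch(1)[of "Suc n" \<alpha>] g G a] a by simp
    have "bloch_norm \<alpha> (\<lambda>z. alexander_op g (x n) z - 0 * x n z)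
        = bloch_norm \<alpha> (\<lambda>z. complex_of_real (1 / N n) * alexander_op g (en (Suc n)) z)"
      by (simp add: Tx)
    also have "\<dots> = cmod (complex_of_real (1 / N n)) * bloch_norm \<alpha> (alexander_op g (en (Suc n)))"
      by (rule bloch_scale(2)[OF Tb])
    also have "\<dots> = (1 / N n) * bloch_norm \<alpha> (alexander_op g (en (Suc n)))"
      using Npos[of n] by (simp add: norm_divide)
    also have "\<dots> \<le> (1 / N n) * (G * N n / of_nat (Suc n))"
      using alex_en_bound[of "Suc n" \<alpha> g G] a g G Npos[of n] unfolding N_def
      by (intro mult_left_mono) auto
    also have "\<dots> = G / of_nat (Suc n)" using Npos[of n] by simp
    finally show ?thesis .
  qed
  have nn: "0 \<le> bloch_norm \<alpha> (\<lambda>z. alexander_op g (x n) z - 0 * x n z)" for n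
    using bloch_norm_nonneg[OF alex_bound(1)[OF xb g G a]] by simp
  have lim: "(\<lambda>n. G / real (Suc n)) \<longlonglongrightarrow> 0"
    using LIMSEQ_Suc[OF lim_const_over_n[of G]] by simp
  have "(\<lambda>n. bloch_norm \<alpha> (\<lambda>z. alexander_op g (x n) z - 0 * x n z)) \<longlonglongrightarrow> 0"
    by (rule tendsto_sandwich[OF _ _ tendsto_const lim]) (use nn bnd in auto)
  then show ?thesis unfolding approx_eigenvalue_def using xb xn by blast
qed


lemma bloch_lin:
  assumes f: "f \<in> bloch0 \<alpha>" and g: "g \<in> bloch0 \<alpha>"
  shows "(\<lambda>z. f z + c * g z) \<in> bloch0 \<alpha>"
proof -
  have hf: "f holomorphic_on DD" "f 0 = 0" "\<And>z. z \<notin> DD \<Longrightarrow> f z = 0" using bloch0D[OF f] by auto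
  have hg: "g holomorphic_on DD" "g 0 = 0" "\<And>z. z \<notin> DD \<Longrightarrow> g z = 0" using bloch0D[OF g] by auto
  have le: "bloch_weight \<alpha> (\<lambda>z. f z + c * g z) z \<le> bloch_norm \<alpha> f + cmod c * bloch_norm \<alpha> g"
    if z: "z \<in> DD" for z
  proof -
    have "bloch_weight \<alpha> (\<lambda>z. f z + c * g z) z = WW \<alpha> z * cmod (deriv f z + c * deriv g z)"
      using deriv_lin[OF hf(1) hg(1) z] by (simp add: bloch_weight_WW)
    also have "\<dots> \<le> WW \<alpha> z * cmod (deriv f z) + cmod c * (WW \<alpha> z * cmod (deriv g z))"
    proof -
      have "cmod (deriv f z + c * deriv g z) \<le> cmod (deriv f z) + cmod c * cmod (deriv g z)"
        using norm_triangle_ineq[of "deriv f z" "c * deriv g z"] by (simp add: norm_mult)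
      then have "WW \<alpha> z * cmod (deriv f z + c * deriv g z) \<le> WW \<alpha> z * (cmod (deriv f z) + cmod c * cmod (deriv g z))"
        using WW_pos[OF z, of \<alpha>] by (intro mult_left_mono) auto
      then show ?thesis by (simp add: algebra_simps)
    qed
    also have "\<dots> \<le> bloch_norm \<alpha> f + cmod c * bloch_norm \<alpha> g"
      using deriv_bound_bloch[OF f z] deriv_bound_bloch[OF g z]
      by (intro add_mono mult_left_mono) auto
    finally show ?thesis .
  qed
  show ?thesis by (rule bloch0I[OF _ _ _ le]) (use hf hg in \<open>auto intro!: holomorphic_intros\<close>)
qed

lemma op_zero:
  assumes "bounded_op_on \<alpha> S"
  shows "S (\<lambda>z. 0) = (\<lambda>z. 0)"
proof -
  have z: "(\<lambda>z. 0) \<in> bloch0 \<alpha>" by (rule bloch0I[where B=0]) (auto simp: bloch_weight_def)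
  have L: "\<forall>f\<in>bloch0 \<alpha>. \<forall>g\<in>bloch0 \<alpha>. \<forall>c. S (\<lambda>z. f z + c * g z) = (\<lambda>z. S f z + c * S g z)"
    using assms unfolding bounded_op_on_def by blast
  have "S (\<lambda>z. 0) = (\<lambda>z. S (\<lambda>z. 0) z + S (\<lambda>z. 0) z)"
    using L[rule_format, OF z z, of 1] by simp
  then have "S (\<lambda>z. 0) z = 0" for z by (metis add_cancel_right_right)
  then show ?thesis by (simp add: fun_eq_iff)
qed

lemma eigen_in_spec:
  assumes f: "f \<in> bloch0 \<alpha>" and nz: "f \<noteq> (\<lambda>z. 0)" and e: "(\<lambda>z. T f z - \<mu> * f z) = (\<lambda>z. 0)"
  shows "\<mu> \<in> bloch_spectrum \<alpha> T"
proof -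
  { fix S assume S: "bounded_op_on \<alpha> S" "\<forall>f\<in>bloch0 \<alpha>. S (\<lambda>z. T f z - \<mu> * f z) = f"
    have "S (\<lambda>z. T f z - \<mu> * f z) = f" using S(2)[rule_format, OF f] .
    then have "S (\<lambda>z. 0) = f" using e by simp
    then have False using op_zero[OF S(1)] nz by simp }
  then show ?thesis unfolding bloch_spectrum_def by blast
qed

lemma approx_in_spec:
  assumes ae: "approx_eigenvalue \<alpha> T \<mu>"
    and Tb: "\<And>f. f \<in> bloch0 \<alpha> \<Longrightarrow> T f \<in> bloch0 \<alpha>"
  shows "\<mu> \<in> bloch_spectrum \<alpha> T"
proof -
  obtain x where x: "\<And>n. x n \<in> bloch0 \<alpha>" "\<And>n. bloch_norm \<alpha> (x n) = 1"
    and lim: "(\<lambda>n. bloch_norm \<alpha> (\<lambda>z. T (x n) z - \<mu> * x n z)) \<longlonglongrightarrow> 0"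
    using ae unfolding approx_eigenvalue_def by blast
  { fix S assume S: "bounded_op_on \<alpha> S" "\<forall>f\<in>bloch0 \<alpha>. S (\<lambda>z. T f z - \<mu> * f z) = f"
    obtain M where M: "\<forall>f\<in>bloch0 \<alpha>. bloch_norm \<alpha> (S f) \<le> M * bloch_norm \<alpha> f"
      using S(1) unfolding bounded_op_on_def by blast
    have yb: "(\<lambda>z. T (x n) z - \<mu> * x n z) \<in> bloch0 \<alpha>" for n
      using bloch_lin[OF Tb[OF x(1)] x(1), where c="-\<mu>"] by simp
    have "eventually (\<lambda>n. bloch_norm \<alpha> (\<lambda>z. T (x n) z - \<mu> * x n z) < 1 / (\<bar>M\<bar> + 1)) sequentially"
      using lim by (rule order_tendstoD) simp
    then obtain n where n: "bloch_norm \<alpha> (\<lambda>z. T (x n) z - \<mu> * x n z) < 1 / (\<bar>M\<bar> + 1)"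
      using eventually_happens'[OF sequentially_bot] by blast
    let ?y = "bloch_norm \<alpha> (\<lambda>z. T (x n) z - \<mu> * x n z)"
    have y0: "0 \<le> ?y" by (rule bloch_norm_nonneg[OF yb])
    have "S (\<lambda>z. T (x n) z - \<mu> * x n z) = x n" using S(2)[rule_format, OF x(1)] .
    then have "1 = bloch_norm \<alpha> (S (\<lambda>z. T (x n) z - \<mu> * x n z))" using x(2)[of n] by simp
    also have "\<dots> \<le> M * ?y" using M[rule_format, OF yb] .
    also have "\<dots> \<le> \<bar>M\<bar> * ?y" using y0 by (intro mult_right_mono) auto
    also have "\<dots> < 1"
    proof -
      have "\<bar>M\<bar> * ?y \<le> \<bar>M\<bar> * (1 / (\<bar>M\<bar> + 1))" using n by (intro mult_left_mono) auto
      also have "\<dots> < 1" by (simp add: field_simps)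
      finally show ?thesis .
    qed
    finally have False by simp }
  then show ?thesis unfolding bloch_spectrum_def by blast
qed

lemma mult_bloch:
  assumes F: "F \<in> bloch0 \<alpha>" and a: "0 \<le> \<alpha>" and \<phi>: "\<phi> holomorphic_on DD"
    and B: "\<And>z. z \<in> DD \<Longrightarrow> cmod (\<phi> z) \<le> B" and B': "\<And>z. z \<in> DD \<Longrightarrow> cmod (deriv \<phi> z) \<le> B'"
  shows "(\<lambda>z. \<phi> z * F z) \<in> bloch0 \<alpha>" "bloch_norm \<alpha> (\<lambda>z. \<phi> z * F z) \<le> (B + B') * bloch_norm \<alpha> F"
proof -
  have hF: "F holomorphic_on DD" "F 0 = 0" "\<And>z. z \<notin> DD \<Longrightarrow> F z = 0" using bloch0D[OF F] by auto
  let ?N = "bloch_norm \<alpha> F"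
  have "cmod (\<phi> 0) \<le> B" "cmod (deriv \<phi> 0) \<le> B'" using B B' by auto
  then have B0: "0 \<le> B" "0 \<le> B'" by (meson norm_ge_zero order_trans)+
  have le: "bloch_weight \<alpha> (\<lambda>z. \<phi> z * F z) z \<le> (B + B') * ?N" if z: "z \<in> DD" for z
  proof -
    have "\<phi> field_differentiable at z" "F field_differentiable at z"
      using \<phi> hF(1) z by (auto intro: holomorphic_on_imp_differentiable_at)
    then have "deriv (\<lambda>z. \<phi> z * F z) z = \<phi> z * deriv F z + deriv \<phi> z * F z"
      by (rule deriv_mult)
    then have d: "deriv (\<lambda>z. \<phi> z * F z) z = deriv \<phi> z * F z + \<phi> z * deriv F z" by simp
    have W: "0 < WW \<alpha> z" by (rule WW_pos[OF z])
    have "bloch_weight \<alpha> (\<lambda>z. \<phi> z * F z) z \<le> cmod (deriv \<phi> z) * (WW \<alpha> z * cmod (F z)) + cmod (\<phi> z) * (WW \<alpha> z * cmod (deriv F z))"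
    proof -
      have "cmod (deriv \<phi> z * F z + \<phi> z * deriv F z) \<le> cmod (deriv \<phi> z) * cmod (F z) + cmod (\<phi> z) * cmod (deriv F z)"
        using norm_triangle_ineq[of "deriv \<phi> z * F z" "\<phi> z * deriv F z"] by (simp add: norm_mult)
      then have "WW \<alpha> z * cmod (deriv \<phi> z * F z + \<phi> z * deriv F z) \<le> WW \<alpha> z * (cmod (deriv \<phi> z) * cmod (F z) + cmod (\<phi> z) * cmod (deriv F z))"
        using W by (intro mult_left_mono) auto
      then show ?thesis using d by (simp add: bloch_weight_WW algebra_simps)
    qed
    also have "\<dots> \<le> B' * ?N + B * ?N"
    proof (intro add_mono mult_mono)
      have "cmod z * ?N \<le> ?N" using z bloch_norm_nonneg[OF F]
        by (intro mult_left_le_one_le) auto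
      then show "WW \<alpha> z * cmod (F z) \<le> ?N"
        using pointwise_bound[OF F z a] by linarith
      show "WW \<alpha> z * cmod (deriv F z) \<le> ?N" by (rule deriv_bound_bloch[OF F z])
    qed (use B' B z bloch_norm_nonneg[OF F] W B0 in auto)
    finally show ?thesis by (simp add: algebra_simps)
  qed
  show "(\<lambda>z. \<phi> z * F z) \<in> bloch0 \<alpha>"
    by (rule bloch0I[OF _ _ _ le]) (use hF \<phi> in \<open>auto intro!: holomorphic_intros\<close>)
  show "bloch_norm \<alpha> (\<lambda>z. \<phi> z * F z) \<le> (B + B') * ?N" by (rule bloch_norm_le[OF le])
qed


definition Lq :: "(complex \<Rightarrow> complex) \<Rightarrow> complex \<Rightarrow> complex" where
  "Lq h = pole0 (\<lambda>w. h w - h 0)"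

definition LL :: "(complex \<Rightarrow> complex) \<Rightarrow> complex \<Rightarrow> complex" where
  "LL h z = contour_integral (linepath 0 z) (Lq h)"

definition EE :: "(complex \<Rightarrow> complex) \<Rightarrow> complex \<Rightarrow> complex \<Rightarrow> complex" where
  "EE h \<beta> z = exp (\<beta> * LL h z)"

lemma Lq_hol: "h holomorphic_on DD \<Longrightarrow> Lq h holomorphic_on DD"
  unfolding Lq_def by (rule pole0_hol) (auto intro!: holomorphic_intros)

lemma Lq_bound:
  assumes h: "h holomorphic_on DD" and H: "\<And>z. z \<in> DD \<Longrightarrow> cmod (h z) \<le> H"
  shows "\<exists>BL\<ge>0. \<forall>z\<in>DD. cmod (Lq h z) \<le> BL"
proof -
  have "cmod (h 0) \<le> H" using H by simp
  then have H0: "0 \<le> H" by (meson norm_ge_zero order_trans)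
  have sub: "cball (0::complex) (1/2) \<subseteq> DD" by (auto simp: subset_iff)
  have "continuous_on (cball 0 (1/2)) (Lq h)"
    using Lq_hol[OF h] holomorphic_on_imp_continuous_on holomorphic_on_subset sub by blast
  then have "bounded (Lq h ` cball 0 (1/2))"
    by (intro compact_imp_bounded compact_continuous_image) auto
  then obtain B0 where B0: "\<And>z. z \<in> cball 0 (1/2) \<Longrightarrow> cmod (Lq h z) \<le> B0"
    unfolding bounded_iff by blast
  have bnd: "cmod (Lq h z) \<le> max B0 (4 * H)" if z: "z \<in> DD" for z
  proof (cases "cmod z \<le> 1/2")
    case True then show ?thesis using B0[of z] by simp
  next
    case False
    then have zn: "z \<noteq> 0" and zh: "1/2 < cmod z" by auto
    have "cmod (h z - h 0) \<le> cmod (h z) + cmod (h 0)" by (rule norm_triangle_ineq4)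
    also have "\<dots> \<le> 2 * H" using H[OF z] H[of 0] by simp
    finally have a: "cmod (h z - h 0) \<le> 2 * H" .
    have "cmod (Lq h z) = cmod (h z - h 0) / cmod z" using zn by (simp add: Lq_def pole0_nz norm_divide)
    also have "\<dots> \<le> (2 * H) / (1/2)"
      using a zh H0 by (intro frac_le) auto
    finally show ?thesis by simp
  qed
  have "0 \<le> max B0 (4 * H)" using order_trans[OF norm_ge_zero bnd[of 0]] by simp
  then show ?thesis using bnd by blast
qed

lemma LL_deriv: "h holomorphic_on DD \<Longrightarrow> z \<in> DD \<Longrightarrow> (LL h has_field_derivative Lq h z) (at z)"
  unfolding LL_def[abs_def] by (rule prim_deriv[OF Lq_hol])

lemma LL_bound:
  assumes h: "h holomorphic_on DD" and BL: "\<And>z. z \<in> DD \<Longrightarrow> cmod (Lq h z) \<le> BL" and z: "z \<in> DD"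
  shows "cmod (LL h z) \<le> BL"
proof -
  have "cmod (LL h z - LL h 0) \<le> BL * cmod (z - 0)"
  proof (rule field_differentiable_bound[where S=DD and f'="Lq h"])
    fix w assume w: "w \<in> DD"
    show "(LL h has_field_derivative Lq h w) (at w within DD)"
      using LL_deriv[OF h w] by (rule DERIV_subset) simp
    show "cmod (Lq h w) \<le> BL" using BL[OF w] .
  qed (use z in auto)
  moreover have "cmod z \<le> 1" using z by simp
  moreover have "0 \<le> BL" using order_trans[OF norm_ge_zero BL[of 0]] by simp
  ultimately have "cmod (LL h z) \<le> BL * cmod z" by (simp add: LL_def)
  also have "\<dots> \<le> BL * 1" using \<open>0 \<le> BL\<close> \<open>cmod z \<le> 1\<close> by (intro mult_left_mono) auto
  finally show ?thesis by simp
qed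

lemma EE_deriv:
  assumes h: "h holomorphic_on DD" and z: "z \<in> DD"
  shows "(EE h \<beta> has_field_derivative \<beta> * Lq h z * EE h \<beta> z) (at z)"
  unfolding EE_def[abs_def]
  using LL_deriv[OF h z] by (auto intro!: derivative_eq_intros)

lemma EE_hol: assumes h: "h holomorphic_on DD" shows "EE h \<beta> holomorphic_on DD"
proof -
  have "EE h \<beta> field_differentiable (at z within DD)" if "z \<in> DD" for z
    using EE_deriv[OF h that] field_differentiable_at_within field_differentiable_def by blast
  then show ?thesis by (simp add: holomorphic_on_def)
qed

lemma EE_nz: "EE h \<beta> z \<noteq> 0" by (simp add: EE_def)

lemma EE_bound:
  assumes h: "h holomorphic_on DD" and H: "\<And>z. z \<in> DD \<Longrightarrow> cmod (h z) \<le> H"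
  shows "\<exists>B. \<forall>z\<in>DD. cmod (EE h \<beta> z) \<le> B \<and> cmod (deriv (EE h \<beta>) z) \<le> B \<and> cmod (1 / EE h \<beta> z) \<le> B"
proof -
  obtain BL where BL: "0 \<le> BL" "\<And>z. z \<in> DD \<Longrightarrow> cmod (Lq h z) \<le> BL"
    using Lq_bound[OF h H] by blast
  define K where "K = exp (cmod \<beta> * BL)"
  have e1: "cmod (EE h \<beta> z) \<le> K" and e2: "cmod (1 / EE h \<beta> z) \<le> K" if z: "z \<in> DD" for z
  proof -
    have L: "cmod (LL h z) \<le> BL" by (rule LL_bound[OF h BL(2) z])
    have a: "cmod (\<beta> * LL h z) \<le> cmod \<beta> * BL"
      using L by (simp add: norm_mult mult_left_mono)
    have "cmod (EE h \<beta> z) = exp (Re (\<beta> * LL h z))" by (simp add: EE_def)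
    also have "\<dots> \<le> exp (cmod (\<beta> * LL h z))"
    proof -
      have "Re (\<beta> * LL h z) \<le> cmod (\<beta> * LL h z)" by (rule complex_Re_le_cmod)
      then show ?thesis by (simp only: exp_le_cancel_iff)
    qed
    also have "\<dots> \<le> K" unfolding K_def using a by simp
    finally show "cmod (EE h \<beta> z) \<le> K" .
    have "1 / EE h \<beta> z = exp (- (\<beta> * LL h z))" by (simp add: EE_def exp_minus divide_inverse)
    then have "cmod (1 / EE h \<beta> z) = exp (Re (- (\<beta> * LL h z)))" by (simp only: norm_exp_eq_Re)
    also have "\<dots> \<le> exp (cmod (- (\<beta> * LL h z)))"
    proof -
      have "Re (- (\<beta> * LL h z)) \<le> cmod (- (\<beta> * LL h z))" by (rule complex_Re_le_cmod)
      then show ?thesis by (simp only: exp_le_cancel_iff)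
    qed
    also have "\<dots> \<le> K" unfolding K_def using a by simp
    finally show "cmod (1 / EE h \<beta> z) \<le> K" .
  qed
  have e3: "cmod (deriv (EE h \<beta>) z) \<le> cmod \<beta> * BL * K" if z: "z \<in> DD" for z
  proof -
    have "deriv (EE h \<beta>) z = \<beta> * Lq h z * EE h \<beta> z" by (rule DERIV_imp_deriv[OF EE_deriv[OF h z]])
    then have "cmod (deriv (EE h \<beta>) z) = cmod \<beta> * cmod (Lq h z) * cmod (EE h \<beta> z)" by (simp add: norm_mult)
    also have "\<dots> \<le> cmod \<beta> * BL * K"
      using BL(2)[OF z] e1[OF z] BL(1) by (intro mult_mono) auto
    finally show ?thesis .
  qed
  show ?thesis
    apply (rule exI[where x="max K (cmod \<beta> * BL * K)"])
    using e1 e2 e3 by fastforce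
qed

lemma op_minus:
  assumes f: "hz f" and g: "g holomorphic_on DD"
  shows "hz (\<lambda>z. alexander_op g f z - \<mu> * f z)"
    and "\<And>z. z \<in> DD \<Longrightarrow> deriv (\<lambda>z. alexander_op g f z - \<mu> * f z) z = pole0 (\<lambda>w. f w * g w) z - \<mu> * deriv f z"
proof -
  note T = alex_hz[OF f g]
  have "hz (\<lambda>z. alexander_op g f z + (-\<mu>) * f z)" by (rule hz_lin[OF T(1) f])
  then show "hz (\<lambda>z. alexander_op g f z - \<mu> * f z)" by simp
  fix z assume z: "z \<in> DD"
  have "deriv (\<lambda>z. alexander_op g f z + (-\<mu>) * f z) z = deriv (alexander_op g f) z + (-\<mu>) * deriv f z"
    using T(1) f z by (intro deriv_lin) (auto simp: hz_def)
  then show "deriv (\<lambda>z. alexander_op g f z - \<mu> * f z) z = pole0 (\<lambda>w. f w * g w) z - \<mu> * deriv f z"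
    using T(2)[OF z] by simp
qed

lemma eigen_cn:
  assumes h: "h holomorphic_on DD" and H: "\<And>z. z \<in> DD \<Longrightarrow> cmod (h z) \<le> H"
    and g: "g holomorphic_on DD" and gh: "\<And>z. g z = g 0 + (h z - h 0)"
    and c: "g 0 \<noteq> 0" and n: "n \<ge> 1" and a: "0 \<le> \<alpha>"
  shows "g 0 / of_nat n \<in> bloch_spectrum \<alpha> (alexander_op g)"
proof -
  define \<beta> where "\<beta> = of_nat n / g 0"
  define f where "f = (\<lambda>z. EE h \<beta> z * en n z)"
  obtain B where B: "\<forall>z\<in>DD. cmod (EE h \<beta> z) \<le> B \<and> cmod (deriv (EE h \<beta>) z) \<le> B \<and> cmod (1 / EE h \<beta> z) \<le> B"
    using EE_bound[OF h H] by blast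
  have fb: "f \<in> bloch0 \<alpha>" unfolding f_def
    by (rule mult_bloch(1)[OF en_bloch(1)[OF n a] a EE_hol[OF h]]) (use B in auto)
  have hf: "hz f" by (rule bloch0_hz[OF fb])
  have "f (1/2) \<noteq> 0" by (simp add: f_def en_def EE_nz)
  then have nz: "f \<noteq> (\<lambda>z. 0)" by auto
  note OM = op_minus[OF hf g, where \<mu>="g 0 / of_nat n"]
  have "(\<lambda>z. alexander_op g f z - g 0 / of_nat n * f z) = (\<lambda>z. 0)"
  proof (rule hz_eq[OF OM(1)])
    show "hz (\<lambda>z. 0)" by (simp add: hz_def)
    fix z assume z: "z \<in> DD" "z \<noteq> 0"
    have dEn: "(en n has_field_derivative of_nat n * z ^ (n - 1)) (at z)" by (rule en_deriv[OF z(1)])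
    have dE: "(EE h \<beta> has_field_derivative \<beta> * Lq h z * EE h \<beta> z) (at z)" by (rule EE_deriv[OF h z(1)])
    define E where "E = EE h \<beta> z"
    define P where "P = z ^ (n - 1)"
    have enz: "en n z = z * P" using z(1) n by (simp add: en_def P_def power_eq_if)
    have Lz: "Lq h z = (h z - h 0) / z" using z(2) by (simp add: Lq_def pole0_nz)
    have "deriv f z = \<beta> * Lq h z * EE h \<beta> z * en n z + of_nat n * z ^ (n - 1) * EE h \<beta> z"
      unfolding f_def by (rule DERIV_imp_deriv[OF DERIV_mult[OF dE dEn]])
    then have df: "deriv f z = \<beta> * ((h z - h 0) / z) * E * (z * P) + of_nat n * P * E"
      by (simp add: E_def P_def enz Lz)
    have fz: "f z = E * (z * P)" by (simp add: f_def E_def enz)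
    have pz: "pole0 (\<lambda>w. f w * g w) z = E * (z * P) * g z / z" using z(2) fz by (simp add: pole0_nz)
    have "pole0 (\<lambda>w. f w * g w) z - g 0 / of_nat n * deriv f z
       = E * (z * P) * g z / z - g 0 / of_nat n * (of_nat n / g 0 * ((h z - h 0) / z) * E * (z * P) + of_nat n * P * E)"
      unfolding pz df \<beta>_def ..
    also have "\<dots> = E * P * (g z - (h z - h 0) - g 0)"
      using z(2) c n by (simp add: field_simps)
    also have "\<dots> = 0" using gh[of z] by simp
    finally show "deriv (\<lambda>z. alexander_op g f z - g 0 / of_nat n * f z) z = deriv (\<lambda>z. 0) z"
      using OM(2)[OF z(1)] by simp
  qed
  then show ?thesis by (rule eigen_in_spec[OF fb nz])
qed


lemma seg_in_DD: "x \<in> DD \<Longrightarrow> t \<in> {0..1::real} \<Longrightarrow> of_real t * x \<in> DD"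
proof -
  assume x: "x \<in> DD" and t: "t \<in> {0..1::real}"
  have "cmod (of_real t * x) = t * cmod x" using t by (simp add: norm_mult)
  also have "\<dots> \<le> cmod x" using t by (simp add: mult_left_le_one_le)
  finally show ?thesis using x by simp
qed

lemma kappa_cont:
  assumes s: "1 < Re s" and that: "continuous_on A g" "\<forall>p\<in>A. 0 \<le> g p"
  shows "continuous_on A (\<lambda>p. complex_of_real (g p) powr (s - 1))"
  using that s by (intro continuous_on_powr_complex) (auto intro!: continuous_intros)

lemma kappa_norm:
  assumes s: "1 < Re s" and t: "t \<in> {0..1::real}"
  shows "cmod (complex_of_real t powr (s - 1)) \<le> 1"
proof -
  have "cmod (complex_of_real t powr (s - 1)) = Re (complex_of_real t) powr Re (s - 1)"
    using t by (intro norm_powr_real_powr) auto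
  also have "\<dots> = t powr (Re s - 1)" by simp
  also have "\<dots> \<le> 1" using t s by (intro powr_le1) auto
  finally show ?thesis .
qed

lemma powr_times_self: "(w::complex) \<noteq> 0 \<Longrightarrow> w powr (s - 1) * w = w powr s"
proof -
  assume w: "w \<noteq> 0"
  have "w powr s = w powr ((s - 1) + 1)" by simp
  also have "\<dots> = w powr (s - 1) * w powr 1" by (rule powr_add)
  also have "w powr 1 = w" using w by (simp add: powr_def)
  finally show ?thesis by simp
qed

lemma sol_base:
  assumes s: "1 < Re s" and om: "\<omega> holomorphic_on DD" and a: "0 \<le> \<alpha>"
    and K: "\<And>z. z \<in> DD \<Longrightarrow> WW \<alpha> z * cmod (\<omega> z) \<le> K"
  shows "\<exists>H. H holomorphic_on DD \<and> (\<forall>z\<in>DD. z * deriv H z + s * H z = \<omega> z)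
            \<and> (\<forall>z\<in>DD. WW \<alpha> z * cmod (H z) \<le> K)"
proof -
  define \<kappa> where "\<kappa> = (\<lambda>t::real. complex_of_real t powr (s - 1))"
  define F where "F = (\<lambda>x (t::real). \<kappa> t * \<omega> (of_real t * x))"
  define Fx where "Fx = (\<lambda>x (t::real). \<kappa> t * (of_real t * deriv \<omega> (of_real t * x)))"
  define H where "H = (\<lambda>x. integral {0..1} (F x))"
  have dom: "deriv \<omega> holomorphic_on DD" using om by (rule holomorphic_deriv) simp
  have omc: "continuous_on DD \<omega>" using om by (rule holomorphic_on_imp_continuous_on)
  have domc: "continuous_on DD (deriv \<omega>)" using dom by (rule holomorphic_on_imp_continuous_on)
  have kc: "continuous_on {0..1} \<kappa>" unfolding \<kappa>_def
    by (rule kappa_cont[OF s]) (auto intro!: continuous_intros)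
  have Fcont: "continuous_on {0..1} (F x)" if x: "x \<in> DD" for x
  proof -
    have "continuous_on {0..1} (\<lambda>t. \<omega> (of_real t * x))"
      by (rule continuous_on_compose2[OF omc]) (use seg_in_DD x in \<open>auto intro!: continuous_intros\<close>)
    then show ?thesis unfolding F_def using kc by (intro continuous_intros) auto
  qed
  have Fint: "F x integrable_on {0..1}" if x: "x \<in> DD" for x
    by (rule integrable_continuous_interval[OF Fcont[OF x]])
  have Fxcont: "continuous_on (DD \<times> {0..1}) (\<lambda>p. Fx (fst p) (snd p))"
  proof -
    have c1: "continuous_on (DD \<times> {0..1}) (\<lambda>p. \<kappa> (snd p))" unfolding \<kappa>_def
      by (rule kappa_cont[OF s]) (auto intro!: continuous_intros)
    have c2: "continuous_on (DD \<times> {0..1}) (\<lambda>p. deriv \<omega> (of_real (snd p) * fst p))"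
      by (rule continuous_on_compose2[OF domc]) (use seg_in_DD in \<open>auto intro!: continuous_intros\<close>)
    show ?thesis unfolding Fx_def using c1 c2 by (intro continuous_intros) auto
  qed
  have Hd: "(H has_field_derivative integral {0..1} (Fx x)) (at x)" if x: "x \<in> DD" for x
  proof -
    have "((\<lambda>x. integral (cbox 0 1) (F x)) has_field_derivative integral (cbox 0 1) (Fx x)) (at x within DD)"
    proof (rule leibniz_rule_field_derivative[where U=DD])
      fix x t assume x: "x \<in> DD" and t: "t \<in> cbox (0::real) 1"
      have tx: "of_real t * x \<in> DD" using seg_in_DD[OF x] t by simp
      have "(\<omega> has_field_derivative deriv \<omega> (of_real t * x)) (at (of_real t * x))"
        using om tx by (intro holomorphic_derivI) auto
      then have "((\<lambda>x. \<omega> (of_real t * x)) has_field_derivative deriv \<omega> (of_real t * x) * of_real t) (at x)"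
        using DERIV_chain2[of \<omega> _ "\<lambda>x. of_real t * x"] by (auto intro!: derivative_eq_intros)
      then have "((\<lambda>x. \<kappa> t * \<omega> (of_real t * x)) has_field_derivative \<kappa> t * (deriv \<omega> (of_real t * x) * of_real t)) (at x)"
        by (rule DERIV_cmult)
      then have "((\<lambda>x. F x t) has_field_derivative Fx x t) (at x)"
        unfolding F_def Fx_def by (simp add: mult_ac)
      then show "((\<lambda>x. F x t) has_field_derivative Fx x t) (at x within DD)"
        by (rule has_field_derivative_at_within)
    next
      show "\<And>x. x \<in> DD \<Longrightarrow> F x integrable_on cbox 0 1" using Fint by simp
      show "continuous_on (DD \<times> cbox 0 1) (\<lambda>(x, t). Fx x t)"
        using Fxcont by (simp add: split_beta)
    qed (use x in auto)
    then show ?thesis unfolding H_def using x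
      by (simp add: at_within_open[OF x open_ball])
  qed
  have Hhol: "H holomorphic_on DD"
  proof -
    have "H field_differentiable (at z within DD)" if "z \<in> DD" for z
      using Hd[OF that] field_differentiable_at_within field_differentiable_def by blast
    then show ?thesis by (simp add: holomorphic_on_def)
  qed
  have eq: "z * deriv H z + s * H z = \<omega> z" if z: "z \<in> DD" for z
  proof -
    define \<Phi> where "\<Phi> = (\<lambda>w::complex. w powr s * \<omega> (w * z))"
    define \<Phi>' where "\<Phi>' = (\<lambda>t::real. s * F z t + z * Fx z t)"
    have ftc: "(\<Phi>' has_integral (\<Phi> (of_real 1) - \<Phi> (of_real 0))) {0..1}"
    proof (rule fundamental_theorem_of_calculus_interior_strong[where S="{}"])
      fix t :: real assume t: "t \<in> {0<..<1} - {}"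
      have tz: "of_real t * z \<in> DD" using seg_in_DD[OF z, of t] t by simp
      have nr: "complex_of_real t \<notin> \<real>\<^sub>\<le>\<^sub>0" using t by (auto simp: complex_nonpos_Reals_iff)
      have d1: "((\<lambda>w. w powr s) has_field_derivative s * of_real t powr (s - 1)) (at (of_real t))"
        by (rule has_field_derivative_powr[OF nr])
      have "(\<omega> has_field_derivative deriv \<omega> (of_real t * z)) (at (of_real t * z))"
        using om tz by (intro holomorphic_derivI) auto
      moreover have "((\<lambda>w. w * z) has_field_derivative z) (at (of_real t))"
        by (auto intro!: derivative_eq_intros)
      ultimately have d2: "((\<lambda>w. \<omega> (w * z)) has_field_derivative deriv \<omega> (of_real t * z) * z) (at (of_real t))"
        by (rule DERIV_chain2)
      have "(\<Phi> has_field_derivative s * of_real t powr (s - 1) * \<omega> (of_real t * z)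
              + deriv \<omega> (of_real t * z) * z * of_real t powr s) (at (of_real t))"
        unfolding \<Phi>_def using DERIV_mult[OF d1 d2] by simp
      moreover have "s * of_real t powr (s - 1) * \<omega> (of_real t * z)
              + deriv \<omega> (of_real t * z) * z * of_real t powr s = \<Phi>' t"
      proof -
        have "complex_of_real t powr s = complex_of_real t powr (s - 1) * of_real t"
          using t powr_times_self[of "complex_of_real t" s] by simp
        then show ?thesis unfolding \<Phi>'_def F_def Fx_def \<kappa>_def by (simp add: algebra_simps)
      qed
      ultimately have "(\<Phi> has_field_derivative \<Phi>' t) (at (of_real t))" by simp
      then show "((\<lambda>t. \<Phi> (of_real t)) has_vector_derivative \<Phi>' t) (at t)"
        by (rule has_vector_derivative_real_field)
    next
      have c1: "continuous_on {0..1::real} (\<lambda>t. complex_of_real t powr s)"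
        using s by (intro continuous_on_powr_complex) (auto intro!: continuous_intros)
      have c2: "continuous_on {0..1::real} (\<lambda>t. \<omega> (of_real t * z))"
        by (rule continuous_on_compose2[OF omc]) (use seg_in_DD z in \<open>auto intro!: continuous_intros\<close>)
      show "continuous_on {0..1} (\<lambda>t. \<Phi> (of_real t))"
        unfolding \<Phi>_def using c1 c2 by (auto intro!: continuous_intros simp: mult.commute)
    qed auto
    have i1: "(F z has_integral H z) {0..1}" unfolding H_def using Fint[OF z] by (simp add: integrable_integral)
    have "continuous_on {0..1} (\<lambda>t. Fx (fst (z, t)) (snd (z, t)))"
      by (rule continuous_on_compose2[OF Fxcont]) (use z in \<open>auto intro!: continuous_intros\<close>)
    then have Fxc: "continuous_on {0..1} (Fx z)" by simp
    have i2: "(Fx z has_integral integral {0..1} (Fx z)) {0..1}"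
      using integrable_continuous_interval[OF Fxc] by (simp add: integrable_integral)
    have "(\<Phi>' has_integral (s * H z + z * integral {0..1} (Fx z))) {0..1}"
      unfolding \<Phi>'_def by (intro has_integral_add has_integral_mult_right i1 i2)
    then have "s * H z + z * integral {0..1} (Fx z) = \<Phi> (of_real 1) - \<Phi> (of_real 0)"
      using ftc by (rule has_integral_unique)
    also have "\<dots> = \<omega> z" by (simp add: \<Phi>_def)
    finally show ?thesis using DERIV_imp_deriv[OF Hd[OF z]] by (simp add: algebra_simps)
  qed
  have bnd: "WW \<alpha> z * cmod (H z) \<le> K" if z: "z \<in> DD" for z
  proof -
    have Wz: "0 < WW \<alpha> z" by (rule WW_pos[OF z])
    have pt: "cmod (F z t) \<le> K / WW \<alpha> z" if t: "t \<in> {0..1}" for t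
    proof -
      have tz: "of_real t * z \<in> DD" by (rule seg_in_DD[OF z t])
      have Wt: "WW \<alpha> z \<le> WW \<alpha> (of_real t * z)"
        using t z a by (intro WW_mono) (auto simp: norm_mult mult_left_le_one_le)
      have "WW \<alpha> z * cmod (\<omega> (of_real t * z)) \<le> WW \<alpha> (of_real t * z) * cmod (\<omega> (of_real t * z))"
        using Wt by (rule mult_right_mono) simp
      also have "\<dots> \<le> K" by (rule K[OF tz])
      finally have o: "cmod (\<omega> (of_real t * z)) \<le> K / WW \<alpha> z" using Wz by (simp add: field_simps)
      have "cmod (F z t) = cmod (\<kappa> t) * cmod (\<omega> (of_real t * z))" by (simp add: F_def norm_mult)
      also have "\<dots> \<le> 1 * (K / WW \<alpha> z)"
        using kappa_norm[OF s t] o unfolding \<kappa>_def by (intro mult_mono) auto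
      finally show ?thesis by simp
    qed
    have "cmod (H z) \<le> K / WW \<alpha> z * measure lborel (cbox (0::real) 1)"
    proof (rule has_integral_bound)
      show "0 \<le> K / WW \<alpha> z" using order_trans[OF norm_ge_zero pt[of 0]] by simp
      show "(F z has_integral H z) (cbox 0 1)" unfolding H_def using Fint[OF z] by (simp add: integrable_integral)
      show "\<And>x. x \<in> cbox 0 1 \<Longrightarrow> cmod (F z x) \<le> K / WW \<alpha> z" using pt by simp
    qed
    then show ?thesis using Wz by (simp add: field_simps)
  qed
  show ?thesis using Hhol eq bnd by blast
qed


lemma WW_half: assumes "cmod z = 1/2" shows "WW \<alpha> z = WW \<alpha> (1/2)"
  unfolding WW_def assms by simp

lemma pole_shift_bound:
  assumes om: "\<omega> holomorphic_on DD" and a: "0 \<le> \<alpha>"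
    and K: "\<And>z. z \<in> DD \<Longrightarrow> WW \<alpha> z * cmod (\<omega> z) \<le> K"
  shows "\<And>z. z \<in> DD \<Longrightarrow> WW \<alpha> z * cmod (pole0 (\<lambda>w. \<omega> w - \<omega> 0) z) \<le> (4 / WW \<alpha> (1/2)) * K"
proof -
  let ?q = "pole0 (\<lambda>w. \<omega> w - \<omega> 0)"
  let ?W2 = "WW \<alpha> (1/2)"
  have h2: "(1/2::complex) \<in> DD" by simp
  have W2: "0 < ?W2" "?W2 \<le> 1" using WW_pos[OF h2] WW_le1[OF h2 a] by auto
  have K0: "cmod (\<omega> 0) \<le> K" using K[of 0] by simp
  then have Kn: "0 \<le> K" by (meson norm_ge_zero order_trans)
  have "K * ?W2 \<le> K" using W2 Kn by (simp add: mult_right_le_one_le)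
  then have c0: "4 * K \<le> (4 / ?W2) * K" using W2 by (simp add: field_simps)
  have hq: "?q holomorphic_on DD" by (rule pole0_hol) (use om in \<open>auto intro!: holomorphic_intros\<close>)
  have far: "cmod (?q z) \<le> 2 * (cmod (\<omega> z) + cmod (\<omega> 0))" if z: "z \<in> DD" "1/2 \<le> cmod z" for z
  proof -
    have zn: "z \<noteq> 0" using z by auto
    have "cmod (?q z) = cmod (\<omega> z - \<omega> 0) / cmod z" using zn by (simp add: pole0_nz norm_divide)
    also have "\<dots> \<le> (cmod (\<omega> z) + cmod (\<omega> 0)) / (1/2)"
      using z by (intro frac_le norm_triangle_ineq4) auto
    finally show ?thesis by simp
  qed
  fix z assume z: "z \<in> DD"
  have Wz: "0 < WW \<alpha> z" "WW \<alpha> z \<le> 1" using WW_pos[OF z] WW_le1[OF z a] by auto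
  show "WW \<alpha> z * cmod (?q z) \<le> (4 / ?W2) * K"
  proof (cases "1/2 \<le> cmod z")
    case True
    have "WW \<alpha> z * cmod (?q z) \<le> WW \<alpha> z * (2 * (cmod (\<omega> z) + cmod (\<omega> 0)))"
      using far[OF z True] Wz by (intro mult_left_mono) auto
    also have "\<dots> = 2 * (WW \<alpha> z * cmod (\<omega> z)) + 2 * (WW \<alpha> z * cmod (\<omega> 0))" by (simp add: algebra_simps)
    also have "\<dots> \<le> 2 * K + 2 * (1 * K)"
      using K[OF z] K0 Wz by (intro add_mono mult_left_mono mult_mono) auto
    also have "\<dots> \<le> (4 / ?W2) * K" using c0 by simp
    finally show ?thesis .
  next
    case False
    have i1: "?q holomorphic_on interior (cball (0::complex) (1/2))"
      using hq by (rule holomorphic_on_subset) auto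
    have i2: "continuous_on (closure (cball (0::complex) (1/2))) ?q"
      using holomorphic_on_imp_continuous_on[OF hq] by (rule continuous_on_subset) auto
    have i3: "bounded (cball (0::complex) (1/2))" by simp
    have i5: "z \<in> cball (0::complex) (1/2)" using False by simp
    have i4: "cmod (?q \<zeta>) \<le> (4 / ?W2) * K" if "\<zeta> \<in> frontier (cball (0::complex) (1/2))" for \<zeta>
    proof -
      from that have \<zeta>: "cmod \<zeta> = 1/2" by simp
      then have \<zeta>D: "\<zeta> \<in> DD" by simp
      have W\<zeta>: "WW \<alpha> \<zeta> = ?W2" by (rule WW_half[OF \<zeta>])
      have o\<zeta>: "cmod (\<omega> \<zeta>) \<le> K / ?W2" using K[OF \<zeta>D] W\<zeta> W2 by (simp add: field_simps)
      have "cmod (?q \<zeta>) \<le> 2 * (cmod (\<omega> \<zeta>) + cmod (\<omega> 0))" using far[OF \<zeta>D] \<zeta> by simp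
      also have "\<dots> \<le> 2 * (K / ?W2 + K / ?W2)"
      proof -
        have "K * ?W2 \<le> K" using W2 Kn by (simp add: mult_right_le_one_le)
        then have "K \<le> K / ?W2" using W2 by (simp add: field_simps)
        then show ?thesis using o\<zeta> K0 by simp
      qed
      also have "\<dots> = (4 / ?W2) * K" by simp
      finally show ?thesis .
    qed
    have mm: "cmod (?q z) \<le> (4 / ?W2) * K"
      by (rule maximum_modulus_frontier[OF i1 i2 i3 i4 i5])
    have "WW \<alpha> z * cmod (?q z) \<le> 1 * cmod (?q z)" using Wz by (intro mult_right_mono) auto
    then show ?thesis using mm by simp
  qed
qed

lemma sol_ind:
  assumes a: "0 \<le> \<alpha>"
  shows "\<forall>s. Re s + of_nat n > 1 \<and> (\<forall>j<n. s + of_nat j \<noteq> 0) \<longrightarrow>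
    (\<exists>C\<ge>0. \<forall>\<omega> K. \<omega> holomorphic_on DD \<and> (\<forall>z\<in>DD. WW \<alpha> z * cmod (\<omega> z) \<le> K) \<longrightarrow>
       (\<exists>H. H holomorphic_on DD \<and> (\<forall>z\<in>DD. z * deriv H z + s * H z = \<omega> z)
            \<and> (\<forall>z\<in>DD. WW \<alpha> z * cmod (H z) \<le> C * K)))"
proof (induction n)
  case 0
  show ?case
  proof (intro allI impI)
    fix s :: complex assume "Re s + of_nat 0 > 1 \<and> (\<forall>j<0. s + of_nat j \<noteq> 0)"
    then have s: "1 < Re s" by simp
    show "\<exists>C\<ge>0. \<forall>\<omega> K. \<omega> holomorphic_on DD \<and> (\<forall>z\<in>DD. WW \<alpha> z * cmod (\<omega> z) \<le> K) \<longrightarrow>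
       (\<exists>H. H holomorphic_on DD \<and> (\<forall>z\<in>DD. z * deriv H z + s * H z = \<omega> z)
            \<and> (\<forall>z\<in>DD. WW \<alpha> z * cmod (H z) \<le> C * K))"
      using sol_base[OF s _ a] by (intro exI[where x=1]) auto
  qed
next
  case (Suc n)
  show ?case
  proof (intro allI impI)
    fix s :: complex assume sa: "Re s + of_nat (Suc n) > 1 \<and> (\<forall>j<Suc n. s + of_nat j \<noteq> 0)"
    have s0: "s \<noteq> 0" using sa by auto
    have "Re (s + 1) + of_nat n > 1 \<and> (\<forall>j<n. (s + 1) + of_nat j \<noteq> 0)"
    proof -
      have "\<forall>j<n. s + of_nat (Suc j) \<noteq> 0" using sa by auto
      then show ?thesis using sa by (simp add: add.assoc)
    qed
    from Suc.IH[rule_format, OF this] obtain C1 where C1: "C1 \<ge> 0" and IH: "\<And>\<omega> K. \<omega> holomorphic_on DD \<Longrightarrow> (\<forall>z\<in>DD. WW \<alpha> z * cmod (\<omega> z) \<le> K) \<Longrightarrow>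
       (\<exists>H. H holomorphic_on DD \<and> (\<forall>z\<in>DD. z * deriv H z + (s + 1) * H z = \<omega> z)
            \<and> (\<forall>z\<in>DD. WW \<alpha> z * cmod (H z) \<le> C1 * K))"
      by blast
    define c0 where "c0 = 4 / WW \<alpha> (1/2)"
    have h2: "(1/2::complex) \<in> DD" by simp
    have c00: "0 \<le> c0" unfolding c0_def using WW_pos[OF h2, of \<alpha>] by simp
    define C where "C = 1 / cmod s + C1 * c0"
    have C0: "0 \<le> C" unfolding C_def using C1 c00 by simp
    show "\<exists>C\<ge>0. \<forall>\<omega> K. \<omega> holomorphic_on DD \<and> (\<forall>z\<in>DD. WW \<alpha> z * cmod (\<omega> z) \<le> K) \<longrightarrow>
       (\<exists>H. H holomorphic_on DD \<and> (\<forall>z\<in>DD. z * deriv H z + s * H z = \<omega> z)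
            \<and> (\<forall>z\<in>DD. WW \<alpha> z * cmod (H z) \<le> C * K))"
    proof (intro exI[where x=C] conjI allI impI C0)
      fix \<omega> K assume asm: "\<omega> holomorphic_on DD \<and> (\<forall>z\<in>DD. WW \<alpha> z * cmod (\<omega> z) \<le> K)"
      have om: "\<omega> holomorphic_on DD" and K: "\<And>z. z \<in> DD \<Longrightarrow> WW \<alpha> z * cmod (\<omega> z) \<le> K" using asm by auto
      have K0: "cmod (\<omega> 0) \<le> K" using K[of 0] by simp
      let ?q = "pole0 (\<lambda>w. \<omega> w - \<omega> 0)"
      have hq: "?q holomorphic_on DD" by (rule pole0_hol) (use om in \<open>auto intro!: holomorphic_intros\<close>)
      have qb: "\<forall>z\<in>DD. WW \<alpha> z * cmod (?q z) \<le> c0 * K"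
        using pole_shift_bound[OF om a K] unfolding c0_def by blast
      obtain H1 where H1: "H1 holomorphic_on DD" "\<And>z. z \<in> DD \<Longrightarrow> z * deriv H1 z + (s + 1) * H1 z = ?q z"
        "\<And>z. z \<in> DD \<Longrightarrow> WW \<alpha> z * cmod (H1 z) \<le> C1 * (c0 * K)"
        using IH[OF hq qb] by blast
      define H where "H = (\<lambda>z. \<omega> 0 / s + z * H1 z)"
      have Hhol: "H holomorphic_on DD" unfolding H_def using H1(1) by (auto intro!: holomorphic_intros)
      have dH: "deriv H z = H1 z + z * deriv H1 z" if z: "z \<in> DD" for z
      proof -
        have dH1: "(H1 has_field_derivative deriv H1 z) (at z)" using H1(1) z by (intro holomorphic_derivI) auto
        have "((\<lambda>z. z * H1 z) has_field_derivative 1 * H1 z + deriv H1 z * z) (at z)"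
          by (rule DERIV_mult[OF DERIV_ident dH1])
        then have "(H has_field_derivative 0 + (1 * H1 z + deriv H1 z * z)) (at z)"
          unfolding H_def by (rule DERIV_add[OF DERIV_const])
        then show ?thesis by (simp add: DERIV_imp_deriv)
      qed
      have eq: "z * deriv H z + s * H z = \<omega> z" if z: "z \<in> DD" for z
      proof -
        have "z * deriv H z + s * H z = \<omega> 0 + z * (z * deriv H1 z + (s + 1) * H1 z)"
          using dH[OF z] s0 unfolding H_def by (simp add: field_simps)
        also have "\<dots> = \<omega> 0 + z * ?q z" using H1(2)[OF z] by simp
        also have "\<dots> = \<omega> z" using pole0_mult[of "\<lambda>w. \<omega> w - \<omega> 0" z] by simp
        finally show ?thesis .
      qed
      have bd: "WW \<alpha> z * cmod (H z) \<le> C * K" if z: "z \<in> DD" for z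
      proof -
        have Wz: "0 < WW \<alpha> z" "WW \<alpha> z \<le> 1" using WW_pos[OF z] WW_le1[OF z a] by auto
        have zn: "cmod z \<le> 1" using z by simp
        have "cmod (H z) \<le> cmod (\<omega> 0) / cmod s + cmod z * cmod (H1 z)"
          unfolding H_def using norm_triangle_ineq[of "\<omega> 0 / s" "z * H1 z"] by (simp add: norm_mult norm_divide)
        then have "WW \<alpha> z * cmod (H z) \<le> WW \<alpha> z * (cmod (\<omega> 0) / cmod s + cmod z * cmod (H1 z))"
          using Wz by (intro mult_left_mono) auto
        then have "WW \<alpha> z * cmod (H z) \<le> WW \<alpha> z * (cmod (\<omega> 0) / cmod s) + cmod z * (WW \<alpha> z * cmod (H1 z))"
          by (simp add: algebra_simps)
        also have "\<dots> \<le> 1 * (K / cmod s) + 1 * (C1 * (c0 * K))"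
        proof (rule add_mono)
          show "WW \<alpha> z * (cmod (\<omega> 0) / cmod s) \<le> 1 * (K / cmod s)"
            using Wz K0 by (intro mult_mono divide_right_mono) auto
          show "cmod z * (WW \<alpha> z * cmod (H1 z)) \<le> 1 * (C1 * (c0 * K))"
            by (rule mult_mono[OF zn H1(3)[OF z]]) (use Wz in auto)
        qed
        also have "\<dots> = C * K" unfolding C_def by (simp add: algebra_simps)
        finally show ?thesis .
      qed
      show "\<exists>H. H holomorphic_on DD \<and> (\<forall>z\<in>DD. z * deriv H z + s * H z = \<omega> z)
            \<and> (\<forall>z\<in>DD. WW \<alpha> z * cmod (H z) \<le> C * K)"
        using Hhol eq bd by blast
    qed
  qed
qed

lemma sol_exists:
  assumes a: "0 \<le> \<alpha>" and s: "\<And>j::nat. s + of_nat j \<noteq> 0"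
  shows "\<exists>C\<ge>0. \<forall>\<omega> K. \<omega> holomorphic_on DD \<and> (\<forall>z\<in>DD. WW \<alpha> z * cmod (\<omega> z) \<le> K) \<longrightarrow>
       (\<exists>H. H holomorphic_on DD \<and> (\<forall>z\<in>DD. z * deriv H z + s * H z = \<omega> z)
            \<and> (\<forall>z\<in>DD. WW \<alpha> z * cmod (H z) \<le> C * K))"
proof -
  define n where "n = nat (\<lceil>1 - Re s\<rceil>) + 1"
  have "1 - Re s \<le> real_of_int \<lceil>1 - Re s\<rceil>" by (rule le_of_int_ceiling)
  also have "\<dots> \<le> real (nat \<lceil>1 - Re s\<rceil>)" by simp
  finally have "Re s + of_nat n > 1" unfolding n_def by simp
  then show ?thesis using sol_ind[OF a, of n] s by blast
qed


lemma cont0_zero: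
  fixes q :: "complex \<Rightarrow> complex"
  assumes r: "0 < r" and c: "continuous_on (ball 0 r) q" and z: "\<And>w. w \<in> ball 0 r \<Longrightarrow> w \<noteq> 0 \<Longrightarrow> q w = 0"
  shows "q 0 = 0"
proof -
  have "isCont q 0" using c r by (intro continuous_on_interior[of "ball 0 r"]) (auto simp: interior_open)
  then have t1: "(q \<longlongrightarrow> q 0) (at 0)" by (simp add: isCont_def)
  have ev: "eventually (\<lambda>w. q w = 0) (at (0::complex))"
  proof -
    have "eventually (\<lambda>w. w \<in> ball 0 r) (at (0::complex))"
      by (rule eventually_at_in_open') (use r in auto)
    moreover have "eventually (\<lambda>w. w \<noteq> 0) (at (0::complex))"
      by (rule eventually_at_filter[THEN iffD2]) simp
    ultimately show ?thesis by eventually_elim (use z in blast)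
  qed
  have t2: "(q \<longlongrightarrow> 0) (at 0)" by (rule tendsto_eventually[OF ev])
  show ?thesis using tendsto_unique[OF _ t1 t2] by simp
qed

lemma uniq:
  assumes D: "\<Delta> holomorphic_on DD" "\<Delta> 0 = 0"
    and eq: "\<And>z. z \<in> DD \<Longrightarrow> z * deriv \<Delta> z + s * \<Delta> z = 0"
    and s: "\<And>k::nat. k \<ge> 1 \<Longrightarrow> s + of_nat k \<noteq> 0"
  shows "\<And>z. z \<in> DD \<Longrightarrow> \<Delta> z = 0"
proof -
  have "\<Delta> constant_on DD"
  proof (rule ccontr)
    assume nc: "\<not> \<Delta> constant_on DD"
    have z0: "(0::complex) \<in> DD" by simp
    obtain g r n where n: "0 < n" and r: "0 < r" "ball 0 r \<subseteq> DD" and g: "g holomorphic_on ball 0 r"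
      and fac: "\<And>w. w \<in> ball 0 r \<Longrightarrow> \<Delta> w = (w - 0) ^ n * g w"
      and gnz: "\<And>w. w \<in> ball 0 r \<Longrightarrow> g w \<noteq> 0"
      by (rule holomorphic_factor_zero_nonconstant[OF D(1) open_ball connected_ball z0 D(2) nc], rule that, assumption+)
    have dg: "deriv g holomorphic_on ball 0 r" using g by (rule holomorphic_deriv) simp
    define q where "q = (\<lambda>w. (of_nat n + s) * g w + w * deriv g w)"
    have qc: "continuous_on (ball 0 r) q" unfolding q_def
      using holomorphic_on_imp_continuous_on[OF g] holomorphic_on_imp_continuous_on[OF dg]
      by (intro continuous_intros) auto
    have qz: "q w = 0" if w: "w \<in> ball 0 r" "w \<noteq> 0" for w
    proof -
      have dgw: "(g has_field_derivative deriv g w) (at w)" using g w by (intro holomorphic_derivI) auto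
      have dp: "((\<lambda>w. w ^ n) has_field_derivative of_nat n * w ^ (n - 1)) (at w)"
        by (auto intro!: derivative_eq_intros)
      have "((\<lambda>w. w ^ n * g w) has_field_derivative (of_nat n * w ^ (n - 1)) * g w + deriv g w * w ^ n) (at w)"
        by (rule DERIV_mult[OF dp dgw])
      then have "(\<Delta> has_field_derivative (of_nat n * w ^ (n - 1)) * g w + deriv g w * w ^ n) (at w)"
        by (rule has_field_derivative_transform_within_open[where S="ball 0 r"]) (use w fac in auto)
      then have dD: "deriv \<Delta> w = (of_nat n * w ^ (n - 1)) * g w + deriv g w * w ^ n" by (rule DERIV_imp_deriv)
      have wD: "w \<in> DD" using w r by blast
      have "0 = w * deriv \<Delta> w + s * \<Delta> w" using eq[OF wD] by simp
      also have "\<dots> = w ^ n * q w"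
      proof -
        have "w * w ^ (n - 1) = w ^ n" using n by (cases n) auto
        then show ?thesis using dD fac[OF w(1)] unfolding q_def by (simp add: algebra_simps)
      qed
      finally show ?thesis using w(2) by simp
    qed
    have "q 0 = 0" by (rule cont0_zero[OF r(1) qc qz])
    then have "(of_nat n + s) * g 0 = 0" by (simp add: q_def)
    moreover have "g 0 \<noteq> 0" using gnz r by simp
    moreover have "s + of_nat n \<noteq> 0" using s n by simp
    ultimately show False by (simp add: add.commute)
  qed
  then obtain c where c: "\<And>z. z \<in> DD \<Longrightarrow> \<Delta> z = c" unfolding constant_on_def by blast
  then have "c = 0" using D(2) by (metis centre_in_ball zero_less_one)
  then show "\<And>z. z \<in> DD \<Longrightarrow> \<Delta> z = 0" using c by blast
qed


lemma notin_spec: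
  assumes h: "h holomorphic_on DD" and H: "\<And>z. z \<in> DD \<Longrightarrow> cmod (h z) \<le> H"
    and g: "g holomorphic_on DD" and G: "\<And>z. z \<in> DD \<Longrightarrow> cmod (g z) \<le> G"
    and gh: "\<And>z. g z = g 0 + (h z - h 0)"
    and a: "0 \<le> \<alpha>" and \<mu>0: "\<mu> \<noteq> 0" and \<mu>n: "\<And>n::nat. n \<ge> 1 \<Longrightarrow> \<mu> \<noteq> g 0 / of_nat n"
  shows "\<mu> \<notin> bloch_spectrum \<alpha> (alexander_op g)"
proof -
  define p where "p = g 0 / \<mu>"
  define \<beta> where "\<beta> = 1 / \<mu>"
  define E where "E = EE h \<beta>"
  define A where "A = (\<lambda>f. \<lambda>z. alexander_op g f z - \<mu> * f z)"
  obtain B where B: "\<forall>z\<in>DD. cmod (E z) \<le> B \<and> cmod (deriv E z) \<le> B \<and> cmod (1 / E z) \<le> B"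
    using EE_bound[OF h H, of \<beta>] unfolding E_def by blast
  have B1: "\<And>z. z \<in> DD \<Longrightarrow> cmod (E z) \<le> B" and B2: "\<And>z. z \<in> DD \<Longrightarrow> cmod (deriv E z) \<le> B"
    and B3: "\<And>z. z \<in> DD \<Longrightarrow> cmod (1 / E z) \<le> B" using B by auto
  have B0: "0 \<le> B" using order_trans[OF norm_ge_zero B1[of 0]] by simp
  have Ehol: "E holomorphic_on DD" unfolding E_def by (rule EE_hol[OF h])
  have Ed: "\<And>z. z \<in> DD \<Longrightarrow> (E has_field_derivative \<beta> * Lq h z * E z) (at z)"
    unfolding E_def by (rule EE_deriv[OF h])
  have Enz: "\<And>z. E z \<noteq> 0" unfolding E_def by (rule EE_nz)
  have pn: "p \<noteq> of_nat k" if k: "k \<ge> 1" for k :: nat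
  proof
    assume "p = of_nat k"
    then have "g 0 = \<mu> * of_nat k" using \<mu>0 by (simp add: p_def field_simps)
    then have "\<mu> = g 0 / of_nat k" using k by simp
    then show False using \<mu>n[OF k] by simp
  qed
  have sj: "(1 - p) + of_nat j \<noteq> 0" for j :: nat
  proof
    assume "(1 - p) + of_nat j = 0"
    then have "p = of_nat (Suc j)" by (simp add: algebra_simps)
    then show False using pn[of "Suc j"] by simp
  qed
  obtain C where C0: "C \<ge> 0" and C: "\<And>\<omega> K. \<omega> holomorphic_on DD \<Longrightarrow> (\<forall>z\<in>DD. WW \<alpha> z * cmod (\<omega> z) \<le> K) \<Longrightarrow>
       (\<exists>H. H holomorphic_on DD \<and> (\<forall>z\<in>DD. z * deriv H z + (1 - p) * H z = \<omega> z)
            \<and> (\<forall>z\<in>DD. WW \<alpha> z * cmod (H z) \<le> C * K))"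
    using sol_exists[OF a sj] by blast
  define M where "M = 2 * B * (1 + cmod p * C) * B / cmod \<mu>"
  have Tb: "\<And>f. f \<in> bloch0 \<alpha> \<Longrightarrow> alexander_op g f \<in> bloch0 \<alpha>"
    using alex_bound(1)[OF _ g G a] by blast
  have Ab: "A f \<in> bloch0 \<alpha>" if f: "f \<in> bloch0 \<alpha>" for f
    using bloch_lin[OF Tb[OF f] f, where c="-\<mu>"] unfolding A_def by simp
  have Alin: "A (\<lambda>z. f1 z + c * f2 z) = (\<lambda>z. A f1 z + c * A f2 z)"
    if f1: "f1 \<in> bloch0 \<alpha>" and f2: "f2 \<in> bloch0 \<alpha>" for f1 f2 c
  proof -
    have "alexander_op g (\<lambda>z. f1 z + c * f2 z) = (\<lambda>z. alexander_op g f1 z + c * alexander_op g f2 z)"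
      by (rule alex_lin[OF bloch0_hz[OF f1] bloch0_hz[OF f2] g])
    then show ?thesis unfolding A_def by (simp add: algebra_simps)
  qed

  have exist: "\<exists>f. f \<in> bloch0 \<alpha> \<and> A f = u \<and> bloch_norm \<alpha> f \<le> M * bloch_norm \<alpha> u"
    if u: "u \<in> bloch0 \<alpha>" for u
  proof -
    have uh: "u holomorphic_on DD" using bloch0D[OF u] by blast
    have du: "deriv u holomorphic_on DD" using uh by (rule holomorphic_deriv) simp
    define \<omega> where "\<omega> = (\<lambda>z. - deriv u z / (\<mu> * E z))"
    define K where "K = B * bloch_norm \<alpha> u / cmod \<mu>"
    have om: "\<omega> holomorphic_on DD" unfolding \<omega>_def
      using du uh Ehol Enz \<mu>0 by (intro holomorphic_intros) auto
    have omb: "\<forall>z\<in>DD. WW \<alpha> z * cmod (\<omega> z) \<le> K"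
    proof
      fix z assume z: "z \<in> DD"
      have "WW \<alpha> z * cmod (\<omega> z) = (WW \<alpha> z * cmod (deriv u z)) * cmod (1 / E z) / cmod \<mu>"
        unfolding \<omega>_def by (simp add: norm_mult norm_divide)
      also have "\<dots> \<le> bloch_norm \<alpha> u * B / cmod \<mu>"
        using deriv_bound_bloch[OF u z] B3[OF z] WW_pos[OF z, of \<alpha>]
        by (intro divide_right_mono mult_mono) (auto simp: bloch_norm_nonneg[OF u])
      finally show "WW \<alpha> z * cmod (\<omega> z) \<le> K" by (simp add: K_def mult.commute)
    qed
    obtain Hs where Hs: "Hs holomorphic_on DD" and Heq: "\<And>z. z \<in> DD \<Longrightarrow> z * deriv Hs z + (1 - p) * Hs z = \<omega> z"
      and Hb: "\<And>z. z \<in> DD \<Longrightarrow> WW \<alpha> z * cmod (Hs z) \<le> C * K"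
      using C[OF om omb] by blast
    define F where "F = (\<lambda>z. if z \<in> DD then z * Hs z else 0)"
    have Fd: "(F has_field_derivative Hs z + z * deriv Hs z) (at z)" if z: "z \<in> DD" for z
    proof -
      have dH: "(Hs has_field_derivative deriv Hs z) (at z)" using Hs z by (intro holomorphic_derivI) auto
      have "((\<lambda>z. z * Hs z) has_field_derivative 1 * Hs z + deriv Hs z * z) (at z)"
        by (rule DERIV_mult[OF DERIV_ident dH])
      then have "((\<lambda>z. z * Hs z) has_field_derivative Hs z + z * deriv Hs z) (at z)" by (simp add: mult.commute)
      then show ?thesis
        by (rule has_field_derivative_transform_within_open[where S=DD]) (use z in \<open>auto simp: F_def\<close>)
    qed
    have dF: "deriv F z = \<omega> z + p * Hs z" if z: "z \<in> DD" for z
      using DERIV_imp_deriv[OF Fd[OF z]] Heq[OF z] by (simp add: algebra_simps)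
    have Fhol: "F holomorphic_on DD"
    proof -
      have "F field_differentiable (at z within DD)" if "z \<in> DD" for z
        using Fd[OF that] field_differentiable_at_within field_differentiable_def by blast
      then show ?thesis by (simp add: holomorphic_on_def)
    qed
    have Fw: "bloch_weight \<alpha> F z \<le> (1 + cmod p * C) * K" if z: "z \<in> DD" for z
    proof -
      have W: "0 < WW \<alpha> z" by (rule WW_pos[OF z])
      have "cmod (deriv F z) \<le> cmod (\<omega> z) + cmod p * cmod (Hs z)"
        using dF[OF z] norm_triangle_ineq[of "\<omega> z" "p * Hs z"] by (simp add: norm_mult)
      then have "WW \<alpha> z * cmod (deriv F z) \<le> WW \<alpha> z * (cmod (\<omega> z) + cmod p * cmod (Hs z))"
        using W by (intro mult_left_mono) auto
      also have "\<dots> = WW \<alpha> z * cmod (\<omega> z) + cmod p * (WW \<alpha> z * cmod (Hs z))" by (simp add: algebra_simps)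
      also have "\<dots> \<le> K + cmod p * (C * K)"
        using omb z Hb[OF z] by (intro add_mono mult_left_mono) auto
      finally show ?thesis by (simp add: bloch_weight_WW algebra_simps)
    qed
    have Fb: "F \<in> bloch0 \<alpha>" by (rule bloch0I[OF Fhol _ _ Fw]) (auto simp: F_def)
    have Fn: "bloch_norm \<alpha> F \<le> (1 + cmod p * C) * K" by (rule bloch_norm_le[OF Fw])
    define f where "f = (\<lambda>z. E z * F z)"
    have fb: "f \<in> bloch0 \<alpha>" unfolding f_def by (rule mult_bloch(1)[OF Fb a Ehol B1 B2])
    have fn0: "bloch_norm \<alpha> f \<le> (B + B) * bloch_norm \<alpha> F" unfolding f_def by (rule mult_bloch(2)[OF Fb a Ehol B1 B2])
    have fn: "bloch_norm \<alpha> f \<le> M * bloch_norm \<alpha> u"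
    proof -
      have "(B + B) * bloch_norm \<alpha> F \<le> (B + B) * ((1 + cmod p * C) * K)"
        using Fn B0 by (intro mult_left_mono) auto
      also have "\<dots> = M * bloch_norm \<alpha> u" unfolding M_def K_def by (simp add: field_simps)
      finally show ?thesis using fn0 by linarith
    qed
    have Af: "A f = u"
    proof -
      note OM = op_minus[OF bloch0_hz[OF fb] g, where \<mu>=\<mu>]
      have "(\<lambda>z. alexander_op g f z - \<mu> * f z) = u"
      proof (rule hz_eq[OF OM(1) bloch0_hz[OF u]])
        fix z assume z: "z \<in> DD" "z \<noteq> 0"
        have "deriv f z = \<beta> * Lq h z * E z * F z + (Hs z + z * deriv Hs z) * E z"
          unfolding f_def by (rule DERIV_imp_deriv[OF DERIV_mult[OF Ed[OF z(1)] Fd[OF z(1)]]])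
        also have "\<dots> = \<beta> * ((h z - h 0) / z) * E z * (z * Hs z) + (Hs z + (\<omega> z - (1 - p) * Hs z)) * E z"
          using z Heq[OF z(1)] by (simp add: F_def Lq_def pole0_nz algebra_simps)
        finally have df: "deriv f z = \<beta> * ((h z - h 0) / z) * E z * (z * Hs z) + (Hs z + (\<omega> z - (1 - p) * Hs z)) * E z" .
        have pz: "pole0 (\<lambda>w. f w * g w) z = E z * (z * Hs z) * g z / z"
          using z by (simp add: pole0_nz f_def F_def)
        have "pole0 (\<lambda>w. f w * g w) z - \<mu> * deriv f z
           = E z * (z * Hs z) * g z / z - \<mu> * (1 / \<mu> * ((h z - h 0) / z) * E z * (z * Hs z)
              + (Hs z + (- deriv u z / (\<mu> * E z) - (1 - g 0 / \<mu>) * Hs z)) * E z)"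
          unfolding pz df \<beta>_def \<omega>_def p_def ..
        also have "\<dots> = E z * Hs z * (g z - (h z - h 0) - g 0) + deriv u z"
          using z(2) \<mu>0 Enz[of z] by (simp add: field_simps)
        also have "\<dots> = deriv u z" using gh[of z] by simp
        finally show "deriv (\<lambda>z. alexander_op g f z - \<mu> * f z) z = deriv u z"
          using OM(2)[OF z(1)] by simp
      qed
      then show ?thesis unfolding A_def .
    qed
    show ?thesis using fb Af fn by blast
  qed

  have inj0: "f = (\<lambda>z. 0)" if f: "f \<in> bloch0 \<alpha>" and e: "A f = (\<lambda>z. 0)" for f
  proof -
    have fh: "f holomorphic_on DD" "f 0 = 0" "\<And>z. z \<notin> DD \<Longrightarrow> f z = 0" using bloch0D[OF f] by auto
    define Fi where "Fi = (\<lambda>z. f z / E z)"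
    have Fih: "Fi holomorphic_on DD" unfolding Fi_def using fh(1) Ehol Enz by (intro holomorphic_intros) auto
    have Fi0: "Fi 0 = 0" using fh(2) by (simp add: Fi_def)
    have fE: "f z = E z * Fi z" for z using Enz[of z] by (simp add: Fi_def)
    note OM = op_minus[OF bloch0_hz[OF f] g, where \<mu>=\<mu>]
    have eqn: "z * deriv Fi z + (- p) * Fi z = 0" if z: "z \<in> DD" for z
    proof (cases "z = 0")
      case True then show ?thesis using Fi0 by simp
    next
      case False
      have dFi: "(Fi has_field_derivative deriv Fi z) (at z)" using Fih z by (intro holomorphic_derivI) auto
      have "((\<lambda>z. E z * Fi z) has_field_derivative \<beta> * Lq h z * E z * Fi z + deriv Fi z * E z) (at z)"
        by (rule DERIV_mult[OF Ed[OF z] dFi])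
      moreover have "f = (\<lambda>z. E z * Fi z)" using fE by (simp add: fun_eq_iff)
      ultimately have "(f has_field_derivative \<beta> * Lq h z * E z * Fi z + deriv Fi z * E z) (at z)"
        by simp
      then have df: "deriv f z = \<beta> * ((h z - h 0) / z) * E z * Fi z + deriv Fi z * E z"
        using False by (simp add: DERIV_imp_deriv Lq_def pole0_nz)
      have "0 = deriv (A f) z" using e by simp
      also have "\<dots> = pole0 (\<lambda>w. f w * g w) z - \<mu> * deriv f z" using OM(2)[OF z] unfolding A_def .
      also have "\<dots> = E z * Fi z * g z / z - \<mu> * (1 / \<mu> * ((h z - h 0) / z) * E z * Fi z + deriv Fi z * E z)"
        using False by (simp add: pole0_nz fE df \<beta>_def)
      also have "\<dots> = E z * (Fi z * (g z - (h z - h 0)) - \<mu> * z * deriv Fi z) / z"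
        using False \<mu>0 by (simp add: field_simps)
      also have "\<dots> = E z * (\<mu> * (p * Fi z - z * deriv Fi z)) / z"
      proof -
        have "\<mu> * (p * Fi z - z * deriv Fi z) = g 0 * Fi z - \<mu> * z * deriv Fi z"
          using \<mu>0 by (simp add: p_def field_simps)
        moreover have "g z - (h z - h 0) = g 0" using gh[of z] by simp
        ultimately have e1: "Fi z * (g z - (h z - h 0)) - \<mu> * z * deriv Fi z = \<mu> * (p * Fi z - z * deriv Fi z)"
          by simp
        show ?thesis by (simp only: e1)
      qed
      finally have "E z * (\<mu> * (p * Fi z - z * deriv Fi z)) = 0" using False by simp
      then have "p * Fi z - z * deriv Fi z = 0" using Enz[of z] \<mu>0 by simp
      then show ?thesis by (simp add: algebra_simps)
    qed
    have sk: "- p + of_nat k \<noteq> 0" if "k \<ge> 1" for k :: nat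
      using pn[OF that] by (simp add: algebra_simps)
    have "\<And>z. z \<in> DD \<Longrightarrow> Fi z = 0" by (rule uniq[OF Fih Fi0 eqn sk]) auto
    then have "f z = 0" for z using fE fh(3) by (cases "z \<in> DD") auto
    then show ?thesis by auto
  qed
  have inj: "f1 = f2" if f1: "f1 \<in> bloch0 \<alpha>" and f2: "f2 \<in> bloch0 \<alpha>" and e: "A f1 = A f2" for f1 f2
  proof -
    have db: "(\<lambda>z. f1 z + (-1) * f2 z) \<in> bloch0 \<alpha>" by (rule bloch_lin[OF f1 f2])
    have "A (\<lambda>z. f1 z + (-1) * f2 z) = (\<lambda>z. A f1 z + (-1) * A f2 z)" by (rule Alin[OF f1 f2])
    also have "\<dots> = (\<lambda>z. 0)" using e by simp
    finally have "(\<lambda>z. f1 z + (-1) * f2 z) = (\<lambda>z. 0)" by (rule inj0[OF db])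
    then have "f1 z + (-1) * f2 z = 0" for z by (rule fun_cong)
    then have "f1 z = f2 z" for z by (simp add: algebra_simps)
    then show ?thesis by auto
  qed
  define S where "S = (\<lambda>u. SOME f. f \<in> bloch0 \<alpha> \<and> A f = u \<and> bloch_norm \<alpha> f \<le> M * bloch_norm \<alpha> u)"
  have S: "S u \<in> bloch0 \<alpha> \<and> A (S u) = u \<and> bloch_norm \<alpha> (S u) \<le> M * bloch_norm \<alpha> u" if u: "u \<in> bloch0 \<alpha>" for u
    unfolding S_def by (rule someI_ex[OF exist[OF u]])
  have Sop: "bounded_op_on \<alpha> S"
    unfolding bounded_op_on_def
  proof (intro conjI ballI allI exI[where x=M])
    fix f assume f: "f \<in> bloch0 \<alpha>"
    show "S f \<in> bloch0 \<alpha>" using S[OF f] by blast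
    show "bloch_norm \<alpha> (S f) \<le> M * bloch_norm \<alpha> f" using S[OF f] by blast
  next
    fix f1 f2 c assume f1: "f1 \<in> bloch0 \<alpha>" and f2: "f2 \<in> bloch0 \<alpha>"
    have l: "(\<lambda>z. f1 z + c * f2 z) \<in> bloch0 \<alpha>" by (rule bloch_lin[OF f1 f2])
    have S1: "S f1 \<in> bloch0 \<alpha>" "A (S f1) = f1" using S[OF f1] by auto
    have S2: "S f2 \<in> bloch0 \<alpha>" "A (S f2) = f2" using S[OF f2] by auto
    have S3: "S (\<lambda>z. f1 z + c * f2 z) \<in> bloch0 \<alpha>" "A (S (\<lambda>z. f1 z + c * f2 z)) = (\<lambda>z. f1 z + c * f2 z)"
      using S[OF l] by auto
    have r: "(\<lambda>z. S f1 z + c * S f2 z) \<in> bloch0 \<alpha>" by (rule bloch_lin[OF S1(1) S2(1)])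
    have "A (\<lambda>z. S f1 z + c * S f2 z) = (\<lambda>z. A (S f1) z + c * A (S f2) z)" by (rule Alin[OF S1(1) S2(1)])
    also have "\<dots> = (\<lambda>z. f1 z + c * f2 z)" using S1(2) S2(2) by simp
    finally show "S (\<lambda>z. f1 z + c * f2 z) = (\<lambda>z. S f1 z + c * S f2 z)"
      using S3(2) by (intro inj[OF S3(1) r]) simp
  qed
  have inv: "S (A f) = f \<and> A (S f) = f" if f: "f \<in> bloch0 \<alpha>" for f
  proof
    have Afb: "A f \<in> bloch0 \<alpha>" by (rule Ab[OF f])
    have "S (A f) \<in> bloch0 \<alpha>" "A (S (A f)) = A f" using S[OF Afb] by auto
    then show "S (A f) = f" using inj f by blast
    show "A (S f) = f" using S[OF f] by blast
  qed
  show ?thesis unfolding bloch_spectrum_def using Sop inv unfolding A_def by blast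
qed


theorem theorem5p3:
  fixes \<alpha> :: real and k :: nat and a :: "nat \<Rightarrow> complex"
    and h g0 :: "complex \<Rightarrow> complex"
  assumes "\<alpha> > 0"
    and "k \<ge> 1"
    and "\<forall>j\<in>{1..k}. a j \<noteq> 0"
    and "h holomorphic_on ball 0 1"
    and "bounded (h ` ball 0 1)"
    and "g0 = (\<lambda>w. (\<Sum>j=1..k. a j) + h w)"
  shows "bounded_op_on \<alpha> (alexander_op g0)
    \<and> bloch_spectrum \<alpha> (alexander_op g0) = {g0 0 / of_nat n | n. n \<ge> 1} \<union> {0}
    \<and> approx_eigenvalue \<alpha> (alexander_op g0) 0"
proof -
  have a: "0 \<le> \<alpha>" using assms(1) by simp
  have h: "h holomorphic_on DD" using assms(4) .
  obtain H where H: "\<And>z. z \<in> DD \<Longrightarrow> cmod (h z) \<le> H"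
    using assms(5) unfolding bounded_iff by blast
  define A0 where "A0 = (\<Sum>j=1..k. a j)"
  have g0: "g0 = (\<lambda>w. A0 + h w)" using assms(6) by (simp add: A0_def)
  have g: "g0 holomorphic_on DD" unfolding g0 using h by (intro holomorphic_intros) auto
  have G: "\<And>z. z \<in> DD \<Longrightarrow> cmod (g0 z) \<le> cmod A0 + H"
  proof -
    fix z assume z: "z \<in> DD"
    have "cmod (g0 z) \<le> cmod A0 + cmod (h z)" unfolding g0 by (rule norm_triangle_ineq)
    then show "cmod (g0 z) \<le> cmod A0 + H" using H[OF z] by simp
  qed
  have gh: "\<And>z. g0 z = g0 0 + (h z - h 0)" unfolding g0 by simp
  have P1: "bounded_op_on \<alpha> (alexander_op g0)" by (rule alex_bounded_op[OF g G a])
  have P3: "approx_eigenvalue \<alpha> (alexander_op g0) 0" by (rule approx_eig0[OF a g G])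
  have Tb: "\<And>f. f \<in> bloch0 \<alpha> \<Longrightarrow> alexander_op g0 f \<in> bloch0 \<alpha>"
    using alex_bound(1)[OF _ g G a] by blast
  have zero_in: "0 \<in> bloch_spectrum \<alpha> (alexander_op g0)" by (rule approx_in_spec[OF P3 Tb])
  have P2: "bloch_spectrum \<alpha> (alexander_op g0) = {g0 0 / of_nat n | n. n \<ge> 1} \<union> {0}"
  proof
    show "bloch_spectrum \<alpha> (alexander_op g0) \<subseteq> {g0 0 / of_nat n | n. n \<ge> 1} \<union> {0}"
    proof
      fix \<mu> assume \<mu>: "\<mu> \<in> bloch_spectrum \<alpha> (alexander_op g0)"
      show "\<mu> \<in> {g0 0 / of_nat n | n. n \<ge> 1} \<union> {0}"
      proof (rule ccontr)
        assume nin: "\<mu> \<notin> {g0 0 / of_nat n | n. n \<ge> 1} \<union> {0}"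
        then have \<mu>0: "\<mu> \<noteq> 0" by blast
        have \<mu>n: "\<And>n::nat. n \<ge> 1 \<Longrightarrow> \<mu> \<noteq> g0 0 / of_nat n" using nin by blast
        have "\<mu> \<notin> bloch_spectrum \<alpha> (alexander_op g0)" by (rule notin_spec[OF h H g G gh a \<mu>0 \<mu>n])
        then show False using \<mu> by contradiction
      qed
    qed
  next
    show "{g0 0 / of_nat n | n. n \<ge> 1} \<union> {0} \<subseteq> bloch_spectrum \<alpha> (alexander_op g0)"
    proof
      fix \<mu> assume \<mu>: "\<mu> \<in> {g0 0 / of_nat n | n. n \<ge> 1} \<union> {0}"
      show "\<mu> \<in> bloch_spectrum \<alpha> (alexander_op g0)"
      proof (cases "\<mu> = 0")
        case True then show ?thesis using zero_in by simp
      next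
        case False
        then obtain n :: nat where n: "n \<ge> 1" and \<mu>eq: "\<mu> = g0 0 / of_nat n" using \<mu> by blast
        then have c: "g0 0 \<noteq> 0" using False by auto
        show ?thesis unfolding \<mu>eq by (rule eigen_cn[OF h H g gh c n a])
      qed
    qed
  qed
  show ?thesis using P1 P2 P3 by blast
qed


end
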